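(* Let $D,L,T\subset\mathbb{P}^2$ be three distinct lines passing through a common point $a\in\mathbb{P}^2$. Then there exists a plane curve $S\subset\mathbb{P}^2$ of degree $6$ such that: (1) $S$ is irreducible and does not pass through $a$; (2) $S$ meets $D$ in $3$ distinct points, at which $S$ is smooth and tangent to $D$; (3) $S$ meets $L$ in $3$ distinct points, which are double points of $S$; (4) $S$ meets $T$ in $2$ distinct points, which are triple points of $S$. If $D,L,T$ are defined over $\mathbb{Q}$, these $8$ points can be chosen to be defined over $\mathbb{Q}$ and $S$ can be defined over a number field. *)

theory Defs
  imports Complex_Main "HOL-Computational_Algebra.Polynomial"
begin

text \<open>Points of the complex projective plane are represented by nonzero vectors of
  complex^3 (homogeneous coordinates); lines by nonzero linear forms (coefficient vectors);
  plane curves of degree d by nonzero ternary forms of degree d, given by their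
  coefficient function on monomials x^i y^j z^k.\<close>

type_synonym cvec = "complex \<times> complex \<times> complex"
type_synonym tform = "nat \<times> nat \<times> nat \<Rightarrow> complex"

definition nonzero :: "cvec \<Rightarrow> bool" where
  "nonzero p \<longleftrightarrow> p \<noteq> (0, 0, 0)"

definition vscale :: "complex \<Rightarrow> cvec \<Rightarrow> cvec" where
  "vscale c p = (case p of (x, y, z) \<Rightarrow> (c * x, c * y, c * z))"

definition proj_eq :: "cvec \<Rightarrow> cvec \<Rightarrow> bool" where
  "proj_eq p q \<longleftrightarrow> (\<exists>c. c \<noteq> 0 \<and> q = vscale c p)"

definition cdot :: "cvec \<Rightarrow> cvec \<Rightarrow> complex" where
  "cdot l p = (case l of (a, b, c) \<Rightarrow> case p of (x, y, z) \<Rightarrow> a * x + b * y + c * z)"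

definition on_line :: "cvec \<Rightarrow> cvec \<Rightarrow> bool" where
  "on_line l p \<longleftrightarrow> cdot l p = 0"

definition fmonos :: "nat \<Rightarrow> (nat \<times> nat \<times> nat) set" where
  "fmonos d = {(i, j, k). i + j + k = d}"

definition is_form :: "nat \<Rightarrow> tform \<Rightarrow> bool" where
  "is_form d F \<longleftrightarrow> (\<forall>m. m \<notin> fmonos d \<longrightarrow> F m = 0) \<and> (\<exists>m. F m \<noteq> 0)"

definition feval :: "nat \<Rightarrow> tform \<Rightarrow> cvec \<Rightarrow> complex" where
  "feval d F p = (case p of (x, y, z) \<Rightarrow>
     (\<Sum>(i, j, k)\<in>fmonos d. F (i, j, k) * x ^ i * y ^ j * z ^ k))"

definition irreducible_form :: "nat \<Rightarrow> tform \<Rightarrow> bool" where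
  "irreducible_form d F \<longleftrightarrow> is_form d F \<and>
     \<not> (\<exists>d1 d2 G H. d1 \<ge> 1 \<and> d2 \<ge> 1 \<and> d1 + d2 = d \<and> is_form d1 G \<and> is_form d2 H \<and>
          (\<forall>x. feval d F x = feval d1 G x * feval d2 H x))"

definition restr :: "nat \<Rightarrow> tform \<Rightarrow> cvec \<Rightarrow> cvec \<Rightarrow> complex poly" where
  "restr d F p v = (case p of (p1, p2, p3) \<Rightarrow> case v of (v1, v2, v3) \<Rightarrow>
     (\<Sum>(i, j, k)\<in>fmonos d. smult (F (i, j, k)) ([:p1, v1:] ^ i * [:p2, v2:] ^ j * [:p3, v3:] ^ k)))"

text \<open>Multiplicity of the curve F = 0 at the point p (order of vanishing of F at p):
  the least m such that some directional Taylor coefficient of order m is nonzero.\<close>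
definition mult_at :: "nat \<Rightarrow> tform \<Rightarrow> cvec \<Rightarrow> nat" where
  "mult_at d F p = (LEAST m. \<exists>v. coeff (restr d F p v) m \<noteq> 0)"

text \<open>The line l is tangent to F = 0 at p: l is contained in the tangent space
  {v. dF_p(v) = 0}.\<close>
definition tangent_at :: "nat \<Rightarrow> tform \<Rightarrow> cvec \<Rightarrow> cvec \<Rightarrow> bool" where
  "tangent_at d F l p \<longleftrightarrow> (\<forall>v. on_line l v \<longrightarrow> coeff (restr d F p v) 1 = 0)"

text \<open>P is a set of representatives of the (distinct) projective points in which the
  curve F = 0 meets the line l.\<close>
definition meets_in :: "nat \<Rightarrow> tform \<Rightarrow> cvec \<Rightarrow> cvec set \<Rightarrow> bool" where
  "meets_in d F l P \<longleftrightarrow>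
     (\<forall>p\<in>P. nonzero p \<and> on_line l p \<and> feval d F p = 0) \<and>
     (\<forall>p\<in>P. \<forall>q\<in>P. proj_eq p q \<longrightarrow> p = q) \<and>
     (\<forall>q. nonzero q \<and> on_line l q \<and> feval d F q = 0 \<longrightarrow> (\<exists>p\<in>P. proj_eq p q))"

definition rat_vec :: "cvec \<Rightarrow> bool" where
  "rat_vec p \<longleftrightarrow> (case p of (x, y, z) \<Rightarrow> x \<in> \<rat> \<and> y \<in> \<rat> \<and> z \<in> \<rat>)"

definition rat_point :: "cvec \<Rightarrow> bool" where
  "rat_point p \<longleftrightarrow> (\<exists>c. c \<noteq> 0 \<and> rat_vec (vscale c p))"

definition number_field :: "complex set \<Rightarrow> bool" where
  "number_field K \<longleftrightarrow> 0 \<in> K \<and> 1 \<in> K \<and>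
     (\<forall>x\<in>K. \<forall>y\<in>K. x + y \<in> K \<and> x * y \<in> K \<and> - x \<in> K) \<and>
     (\<forall>x\<in>K. x \<noteq> 0 \<longrightarrow> inverse x \<in> K) \<and>
     (\<exists>B. finite B \<and> B \<subseteq> K \<and> K \<subseteq> {(\<Sum>b\<in>B. of_rat (r b) * b) | r. True})"

definition over_number_field :: "tform \<Rightarrow> bool" where
  "over_number_field F \<longleftrightarrow> (\<exists>K c. number_field K \<and> c \<noteq> 0 \<and> (\<forall>m. c * F m \<in> K))"

end

theory Submission
  imports Defs "HOL-Computational_Algebra.Fundamental_Theorem_Algebra"
begin


lemma finite_fmonos: "finite (fmonos d)"
proof -
  have "fmonos d \<subseteq> {..d} \<times> {..d} \<times> {..d}" by (auto simp: fmonos_def)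
  then show ?thesis by (rule finite_subset) auto
qed

lemma restr_eval:
  "poly (restr d F (p1,p2,p3) (v1,v2,v3)) t = feval d F (p1 + t*v1, p2 + t*v2, p3 + t*v3)"
  unfolding restr_def feval_def
  by (auto simp: poly_sum algebra_simps intro!: sum.cong split: prod.split)

lemma restr_eqI:
  assumes "\<And>t. feval d F (p1 + t*v1, p2 + t*v2, p3 + t*v3) = feval d' G (q1 + t*w1, q2 + t*w2, q3 + t*w3)"
  shows "restr d F (p1,p2,p3) (v1,v2,v3) = restr d' G (q1,q2,q3) (w1,w2,w3)"
  using assms by (simp add: poly_eq_poly_eq_iff[symmetric] restr_eval fun_eq_iff)

lemma restr_mult:
  assumes "\<And>x. feval d F x = feval d1 G x * feval d2 H x"
  shows "restr d F (p1,p2,p3) (v1,v2,v3) = restr d1 G (p1,p2,p3) (v1,v2,v3) * restr d2 H (p1,p2,p3) (v1,v2,v3)"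
  using assms by (simp add: poly_eq_poly_eq_iff[symmetric] restr_eval fun_eq_iff)

lemma fmonos6: "fmonos 6 = {(i,j,k). i \<le> 6 \<and> j \<le> 6 - i \<and> k = 6 - i - j}"
  by (auto simp: fmonos_def)


lemma feval_nested: "feval d F (x,y,z) = (\<Sum>i\<le>d. \<Sum>j\<le>d-i. F (i,j,d-i-j) * x^i * y^j * z^(d-i-j))"
proof -
  have inj: "inj_on (\<lambda>(i,j). (i,j,d-i-j)) (SIGMA i:{..d}. {..d-i})" by (auto simp: inj_on_def)
  have im: "fmonos d = (\<lambda>(i,j). (i,j,d-i-j)) ` (SIGMA i:{..d}. {..d-i})"
    by (auto simp: fmonos_def image_iff)
  have "feval d F (x,y,z) = (\<Sum>(i,j)\<in>(SIGMA i:{..d}. {..d-i}). F (i,j,d-i-j) * x^i * y^j * z^(d-i-j))"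
    unfolding feval_def im by (subst sum.reindex[OF inj]) (simp add: case_prod_beta')
  also have "\<dots> = (\<Sum>i\<le>d. \<Sum>j\<le>d-i. F (i,j,d-i-j) * x^i * y^j * z^(d-i-j))"
    by (subst sum.Sigma) auto
  finally show ?thesis .
qed

definition F0 :: tform where
  "F0 m = (if m = (0,2,4) then 5184 else (if m = (0,3,3) then (-864) else (if m = (0,4,2) then (-108) else (if m = (0,5,1) then 12 else (if m = (0,6,0) then 1 else (if m = (1,0,5) then 9135 else (if m = (1,1,4) then (-28944) else (if m = (1,2,3) then (-1956) else (if m = (1,3,2) then 1960 else (if m = (1,4,1) then (-57) else (if m = (1,5,0) then (-18) else (if m = (2,0,4) then (-7910) else (if m = (2,1,3) then 40980 else (if m = (2,2,2) then (-5481) else (if m = (2,3,1) then (-612) else (if m = (2,4,0) then 108 else (if m = (3,1,2) then (-14346) else (if m = (3,2,1) then 3132 else (if m = (3,3,0) then (-216) else 0)))))))))))))))))))"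

lemma feval_F0: "feval 6 F0 (x,y,z) = 5184 * y^2 * z^4 + (-864) * y^3 * z^3 + (-108) * y^4 * z^2 + 12 * y^5 * z + 1 * y^6 + 9135 * x * z^5 + (-28944) * x * y * z^4 + (-1956) * x * y^2 * z^3 + 1960 * x * y^3 * z^2 + (-57) * x * y^4 * z + (-18) * x * y^5 + (-7910) * x^2 * z^4 + 40980 * x^2 * y * z^3 + (-5481) * x^2 * y^2 * z^2 + (-612) * x^2 * y^3 * z + 108 * x^2 * y^4 + (-14346) * x^3 * y * z^2 + 3132 * x^3 * y^2 * z + (-216) * x^3 * y^3"
  unfolding feval_nested by (simp add: eval_nat_numeral F0_def)


lemma restr_pt0: "restr 6 F0 (0,(-12),1) (v1,v2,v3) = [:(0), ((-15057) * v1), (6718464 * v3^2 + 1119744 * v2 * v3 + 46656 * v2^2 + (-7365717) * v1 * v3 + (-607536) * v1 * v2 + 2008090 * v1^2), (4478976 * v3^3 + (-1119744) * v2 * v3^2 + (-279936) * v2^2 * v3 + (-12960) * v2^3 + (-2056554) * v1 * v3^2 + 2112480 * v1 * v2 * v3 + 189276 * v1 * v2^2 + (-2027912) * v1^2 * v3 + (-838356) * v1^2 * v2 + 996408 * v1^3), (746496 * v3^4 + (-870912) * v2 * v3^3 + 31104 * v2^2 * v3^2 + 25056 * v2^3 * v3 + 1332 * v2^4 + 1198998 * v1 * v3^3 + 813888 * v1 * v2 * v3^2 + (-196236) * v1 * v2^2 * v3 + (-21224) * v1 * v2^3 + (-2312004) * v1^2 * v3^2 + 121644 * v1^2 * v2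 * v3 + 109863 * v1^2 * v2^2 + 795312 * v1^3 * v3 + (-182826) * v1^3 * v2), ((-124416) * v2 * v3^4 + 51840 * v2^2 * v3^3 + 2592 * v2^3 * v3^2 + (-936) * v2^4 * v3 + (-60) * v2^5 + 393003 * v1 * v3^4 + (-68832) * v1 * v2 * v3^3 + (-76428) * v1 * v2^2 * v3^2 + 6656 * v1 * v2^3 * v3 + 1023 * v1 * v2^4 + (-523400) * v1^2 * v3^3 + 254484 * v1^2 * v2 * v3^2 + 11070 * v1^2 * v2^2 * v3 + (-5796) * v1^2 * v2^3 + 172152 * v1^3 * v3^2 + (-103860) * v1^3 * v2 * v3 + 10908 * v1^3 * v2^2), (5184 * v2^2 * v3^4 + (-864) * v2^3 * v3^3 + (-108) * v2^4 * v3^2 + 12 * v2^5 * v3 + 1 * v2^6 + 9135 * v1 * v3^5 + (-28944) * v1 * v2 * v3^4 + (-1956) * v1 * v2^2 * v3^3 + 1960 * v1 * v2^3 * v3^2 + (-57) * v1 * v2^4 * v3 + (-18) * v1 * v2^5 + (-7910) * v1^2 * v3^4 + 40980 * v1^2 * v2 * v3^3 + (-5481) * v1^2 * v2^2 * v3^2 + (-612) * v1^2 * v2^3 * v3 + 108 * v1^2 * v2^4 + (-14346) * v1^3 * v2 * v3^2 + 3132 * v1^3 * v2^2 * v3 + (-216) * v1^3 * v2^3):]"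
  by (simp add: poly_eq_poly_eq_iff[symmetric] fun_eq_iff restr_eval feval_F0 algebra_simps power2_eq_square power3_eq_cube power_numeral_reduce)

lemma restr_pt1: "restr 6 F0 (0,0,1) (v1,v2,v3) = [:(0), (9135 * v1), (5184 * v2^2 + 45675 * v1 * v3 + (-28944) * v1 * v2 + (-7910) * v1^2), (20736 * v2^2 * v3 + (-864) * v2^3 + 91350 * v1 * v3^2 + (-115776) * v1 * v2 * v3 + (-1956) * v1 * v2^2 + (-31640) * v1^2 * v3 + 40980 * v1^2 * v2), (31104 * v2^2 * v3^2 + (-2592) * v2^3 * v3 + (-108) * v2^4 + 91350 * v1 * v3^3 + (-173664) * v1 * v2 * v3^2 + (-5868) * v1 * v2^2 * v3 + 1960 * v1 * v2^3 + (-47460) * v1^2 * v3^2 + 122940 * v1^2 * v2 * v3 + (-5481) * v1^2 * v2^2 + (-14346) * v1^3 * v2), (20736 * v2^2 * v3^3 + (-2592) * v2^3 * v3^2 + (-216) * v2^4 * v3 + 12 * v2^5 + 45675 * v1 * v3^4 + (-115776) * v1 * v2 * v3^3 + (-5868) * v1 * v2^2 * v3^2 + 3920 * v1 * v2^3 * v3 + (-57) * v1 * v2^4 + (-31640) * v1^2 * v3^3 + 122940 * v1^2 * v2 * v3^2 + (-10962) * v1^2 * v2^2 * v3 + (-612) * v1^2 * v2^3 + (-28692) * v1^3 * v2 * v3 + 3132 * v1^3 * v2^2), (5184 * v2^2 * v3^4 + (-864) * v2^3 * v3^3 + (-108) * v2^4 * v3^2 + 12 * v2^5 * v3 + 1 *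 v2^6 + 9135 * v1 * v3^5 + (-28944) * v1 * v2 * v3^4 + (-1956) * v1 * v2^2 * v3^3 + 1960 * v1 * v2^3 * v3^2 + (-57) * v1 * v2^4 * v3 + (-18) * v1 * v2^5 + (-7910) * v1^2 * v3^4 + 40980 * v1^2 * v2 * v3^3 + (-5481) * v1^2 * v2^2 * v3^2 + (-612) * v1^2 * v2^3 * v3 + 108 * v1^2 * v2^4 + (-14346) * v1^3 * v2 * v3^2 + 3132 * v1^3 * v2^2 * v3 + (-216) * v1^3 * v2^3):]"
  by (simp add: poly_eq_poly_eq_iff[symmetric] fun_eq_iff restr_eval feval_F0 algebra_simps power2_eq_square power3_eq_cube power_numeral_reduce)

lemma restr_pt2: "restr 6 F0 (0,6,1) (v1,v2,v3) = [:(0), ((-25425) * v1), (419904 * v3^2 + (-139968) * v2 * v3 + 11664 * v2^2 + (-87381) * v1 * v3 + (-6624) * v1 * v2 + 48430 * v1^2), (559872 * v3^3 + (-46656) * v2^2 * v3 + 5184 * v2^3 + (-738522) * v1 * v3^2 + 187920 * v1 * v2 * v3 + (-17868) * v1 * v2^2 + 179176 * v1^2 * v3 + 2424 * v1^2 * v2 + (-19980) * v1^3), (186624 * v3^4 + 155520 * v2 * v3^3 + (-38880) * v2^2 * v3^2 + (-3456) * v2^3 * v3 + 792 * v2^4 + (-673722) * v1 * v3^3 + (-32400) * v1 * v2 * v3^2 + 52380 * v1 * v2^2 * v3 + (-5888) * v1 * v2^3 + 492864 * v1^2 * v3^2 + (-74700) * v1^2 * v2 * v3 + 6831 * v1^2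 * v2^2 + (-59400) * v1^3 * v3 + (-90) * v1^3 * v2), (62208 * v2 * v3^4 + 5184 * v2^2 * v3^3 + (-5184) * v2^3 * v3^2 + 144 * v2^4 * v3 + 48 * v2^5 + (-127989) * v1 * v3^4 + (-139248) * v1 * v2 * v3^3 + 29412 * v1 * v2^2 * v3^2 + 2552 * v1 * v2^3 * v3 + (-597) * v1 * v2^4 + 214240 * v1^2 * v3^3 + 57168 * v1^2 * v2 * v3^2 + (-21978) * v1^2 * v2^2 * v3 + 1980 * v1^2 * v2^3 + (-86076) * v1^3 * v3^2 + 8892 * v1^3 * v2 * v3 + (-756) * v1^3 * v2^2), (5184 * v2^2 * v3^4 + (-864) * v2^3 * v3^3 + (-108) * v2^4 * v3^2 + 12 * v2^5 * v3 + 1 * v2^6 + 9135 * v1 * v3^5 + (-28944) * v1 * v2 * v3^4 + (-1956) * v1 * v2^2 * v3^3 + 1960 * v1 * v2^3 * v3^2 + (-57) * v1 * v2^4 * v3 + (-18) * v1 * v2^5 + (-7910) * v1^2 * v3^4 + 40980 * v1^2 * v2 * v3^3 + (-5481) * v1^2 * v2^2 * v3^2 + (-612) * v1^2 * v2^3 * v3 + 108 * v1^2 * v2^4 + (-14346) * v1^3 * v2 * v3^2 + 3132 * v1^3 * v2^2 * v3 + (-216) * v1^3 * v2^3):]"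
  by (simp add: poly_eq_poly_eq_iff[symmetric] fun_eq_iff restr_eval feval_F0 algebra_simps power2_eq_square power3_eq_cube power_numeral_reduce)

lemma restr_pt3: "restr 6 F0 (1,(-5),1) (v1,v2,v3) = [:(0), (0), (874615 * v3^2 + 135792 * v2 * v3 + 5184 * v2^2 + (-1070270) * v1 * v3 + (-83952) * v1 * v2 + 325255 * v1^2), (1011190 * v3^3 + (-256020) * v2 * v3^2 + (-59652) * v2^2 * v3 + (-2592) * v2^3 + (-815210) * v1 * v3^2 + 458688 * v1 * v2 * v3 + 41508 * v1 * v2^2 + (-178610) * v1^2 * v3 + (-189708) * v1^2 * v2 + 177030 * v1^3), (312085 * v3^4 + (-327396) * v2 * v3^3 + 13035 * v2^2 * v3^2 + 9176 * v2^3 * v3 + 468 * v2^4 + 148250 * v1 * v3^3 + 344478 * v1 * v2 * v3^2 + (-67386) * v1 * v2^2 * v3 + (-7592) * v1 * v2^3 + (-583995) * v1^2 * v3^2 + 6624 * v1^2 * v2 * v3 + 39015 * v1^2 * v2^2 + 221760 * v1^3 * v3 + (-61866) * v1^3 * v2), (9135 * v3^5 + (-80784) * v2 * v3^4 + 31740 * v2^2 * v3^3 + 1528 * v2^3 * v3^2 + (-573) * v2^4 * v3 + (-36) * v2^5 + 174575 * v1 * v3^4 + (-14256) * v1 * v2 * v3^3 + (-46230) * v1 * v2^2 * v3^2 + 3836 * v1 * v2^3 * v3 + 609 * v1 * v2^4 + (-236540) * v1^2 * v3^3 + 134712 * v1^2 * v2 * v3^2 + 7614 * v1^2 * v2^2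 * v3 + (-3420) * v1^2 * v2^3 + 71730 * v1^3 * v3^2 + (-60012) * v1^3 * v2 * v3 + 6372 * v1^3 * v2^2), (5184 * v2^2 * v3^4 + (-864) * v2^3 * v3^3 + (-108) * v2^4 * v3^2 + 12 * v2^5 * v3 + 1 * v2^6 + 9135 * v1 * v3^5 + (-28944) * v1 * v2 * v3^4 + (-1956) * v1 * v2^2 * v3^3 + 1960 * v1 * v2^3 * v3^2 + (-57) * v1 * v2^4 * v3 + (-18) * v1 * v2^5 + (-7910) * v1^2 * v3^4 + 40980 * v1^2 * v2 * v3^3 + (-5481) * v1^2 * v2^2 * v3^2 + (-612) * v1^2 * v2^3 * v3 + 108 * v1^2 * v2^4 + (-14346) * v1^3 * v2 * v3^2 + 3132 * v1^3 * v2^2 * v3 + (-216) * v1^3 * v2^3):]"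
  by (simp add: poly_eq_poly_eq_iff[symmetric] fun_eq_iff restr_eval feval_F0 algebra_simps power2_eq_square power3_eq_cube power_numeral_reduce)

lemma restr_pt4: "restr 6 F0 (1,1,1) (v1,v2,v3) = [:(0), (0), ((-2165) * v3^2 + (-6336) * v2 * v3 + 1296 * v2^2 + 10666 * v1 * v3 + 3744 * v1 * v2 + (-7205) * v1^2), (2830 * v3^3 + (-27888) * v2 * v3^2 + 7668 * v2^2 * v3 + 10738 * v1 * v3^2 + 15096 * v1 * v2 * v3 + (-2484) * v1 * v2^2 + 3046 * v1^2 * v3 + 2424 * v1^2 * v2 + (-11430) * v1^3), (14005 * v3^4 + (-39828) * v2 * v3^3 + 17211 * v2^2 * v3^2 + (-256) * v2^3 * v3 + (-72) * v2^4 + (-7702) * v1 * v3^3 + 1398 * v1 * v2 * v3^2 + (-10650) * v1 * v2^2 * v3 + 544 * v1 * v2^3 + 26961 * v1^2 * v3^2 + 31896 * v1^2 * v2 * v3 + 783 * v1^2 * v2^2 + (-25560) * v1^3 * v3 + (-8730) * v1^3 * v2), (9135 * v3^5 + (-18576) * v2 * v3^4 + 16188 * v2^2 * v3^3 + (-1064) * v2^3 * v3^2 + (-213) * v2^4 * v3 + 911 * v1 * v3^4 + (-37728) * v1 * v2 * v3^3 + (-10950) * v1 * v2^2 * v3^2 + 2468 * v1 * v2^3 * v3 + 69 * v1 * v2^4 + 9340 * v1^2 * v3^3 + 68940 * v1^2 * v2 * v3^2 + (-3402) * v1^2 * v2^2 * v3 + (-828) * v1^2 * v2^3 + (-14346)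 * v1^3 * v3^2 + (-22428) * v1^3 * v2 * v3 + 2484 * v1^3 * v2^2), (5184 * v2^2 * v3^4 + (-864) * v2^3 * v3^3 + (-108) * v2^4 * v3^2 + 12 * v2^5 * v3 + 1 * v2^6 + 9135 * v1 * v3^5 + (-28944) * v1 * v2 * v3^4 + (-1956) * v1 * v2^2 * v3^3 + 1960 * v1 * v2^3 * v3^2 + (-57) * v1 * v2^4 * v3 + (-18) * v1 * v2^5 + (-7910) * v1^2 * v3^4 + 40980 * v1^2 * v2 * v3^3 + (-5481) * v1^2 * v2^2 * v3^2 + (-612) * v1^2 * v2^3 * v3 + 108 * v1^2 * v2^4 + (-14346) * v1^3 * v2 * v3^2 + 3132 * v1^3 * v2^2 * v3 + (-216) * v1^3 * v2^3):]"
  by (simp add: poly_eq_poly_eq_iff[symmetric] fun_eq_iff restr_eval feval_F0 algebra_simps power2_eq_square power3_eq_cube power_numeral_reduce)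

lemma restr_pt5: "restr 6 F0 (1,7,1) (v1,v2,v3) = [:(0), (0), (80311 * v3^2 + (-48240) * v2 * v3 + 5184 * v2^2 + 177058 * v1 * v3 + (-24336) * v1 * v2 + (-3353) * v1^2), (160006 * v3^3 + (-29580) * v2 * v3^2 + (-17028) * v2^2 * v3 + 2592 * v2^3 + 48286 * v1 * v3^2 + 104592 * v1 * v2 * v3 + (-16668) * v1 * v2^2 + (-60242) * v1^2 * v3 + 15708 * v1^2 * v2 + (-21042) * v1^3), (89173 * v3^4 + 61116 * v2 * v3^3 + (-25269) * v2^2 * v3^2 + (-1048) * v2^3 * v3 + 468 * v2^4 + (-304486) * v1 * v3^3 + 81678 * v1 * v2 * v3^2 + 21462 * v1 * v2^2 * v3 + (-4280) * v1 * v2^3 + 243285 * v1^2 * v3^2 + (-75024) * v1^2 * v2 * v3 + 9207 * v1^2 * v2^2 + (-47376) * v1^3 * v3 + (-2250) * v1^3 * v2), (9135 * v3^5 + 43632 * v2 * v3^4 + 636 * v2^2 * v3^3 + (-3656) * v2^3 * v3^2 + 147 * v2^4 * v3 + 36 * v2^5 + (-172753) * v1 * v3^4 + (-61200) * v1 * v2 * v3^3 + 24330 * v1 * v2^2 * v3^2 + 1100 * v1 * v2^3 * v3 + (-471) * v1 * v2^4 + 255220 * v1^2 * v3^3 + 3168 * v1^2 * v2 * v3^2 + (-14418) * v1^2 * v2^2 * v3 + 1764 * v1^2 * v2^3 + (-100422) * v1^3 * v3^2 + 15156 * v1^3 * v2 * v3 + (-1404) * v1^3 * v2^2), (5184 *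 v2^2 * v3^4 + (-864) * v2^3 * v3^3 + (-108) * v2^4 * v3^2 + 12 * v2^5 * v3 + 1 * v2^6 + 9135 * v1 * v3^5 + (-28944) * v1 * v2 * v3^4 + (-1956) * v1 * v2^2 * v3^3 + 1960 * v1 * v2^3 * v3^2 + (-57) * v1 * v2^4 * v3 + (-18) * v1 * v2^5 + (-7910) * v1^2 * v3^4 + 40980 * v1^2 * v2 * v3^3 + (-5481) * v1^2 * v2^2 * v3^2 + (-612) * v1^2 * v2^3 * v3 + 108 * v1^2 * v2^4 + (-14346) * v1^3 * v2 * v3^2 + 3132 * v1^3 * v2^2 * v3 + (-216) * v1^3 * v2^3):]"
  by (simp add: poly_eq_poly_eq_iff[symmetric] fun_eq_iff restr_eval feval_F0 algebra_simps power2_eq_square power3_eq_cube power_numeral_reduce)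

lemma restr_pt6: "restr 6 F0 (1,0,0) (v1,v2,v3) = [:(0), (0), (0), ((-14346) * v2 * v3^2 + 3132 * v2^2 * v3 + (-216) * v2^3), ((-7910) * v3^4 + 40980 * v2 * v3^3 + (-5481) * v2^2 * v3^2 + (-612) * v2^3 * v3 + 108 * v2^4 + (-43038) * v1 * v2 * v3^2 + 9396 * v1 * v2^2 * v3 + (-648) * v1 * v2^3), (9135 * v3^5 + (-28944) * v2 * v3^4 + (-1956) * v2^2 * v3^3 + 1960 * v2^3 * v3^2 + (-57) * v2^4 * v3 + (-18) * v2^5 + (-15820) * v1 * v3^4 + 81960 * v1 * v2 * v3^3 + (-10962) * v1 * v2^2 * v3^2 + (-1224) * v1 * v2^3 * v3 + 216 * v1 * v2^4 + (-43038) * v1^2 * v2 * v3^2 + 9396 * v1^2 * v2^2 * v3 + (-648) * v1^2 * v2^3), (5184 * v2^2 * v3^4 + (-864) * v2^3 * v3^3 + (-108) * v2^4 * v3^2 + 12 * v2^5 * v3 + 1 * v2^6 + 9135 * v1 * v3^5 + (-28944) * v1 * v2 * v3^4 + (-1956) * v1 * v2^2 * v3^3 + 1960 * v1 * v2^3 * v3^2 + (-57) * v1 * v2^4 * v3 + (-18) * v1 * v2^5 + (-7910) * v1^2 * v3^4 + 40980 * v1^2 * v2 * v3^3 + (-5481) * v1^2 * v2^2 * v3^2 + (-612) * v1^2 * v2^3 * v3 + 108 * v1^2 * v2^4 + (-14346) * v1^3 * v2 * v3^2 + 3132 * v1^3 * v2^2 * v3 + (-216) * v1^3 * v2^3):]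"
  by (simp add: poly_eq_poly_eq_iff[symmetric] fun_eq_iff restr_eval feval_F0 algebra_simps power2_eq_square power3_eq_cube power_numeral_reduce)

lemma restr_pt7: "restr 6 F0 (1,6,0) (v1,v2,v3) = [:(0), (0), (0), ((-11160) * v3^3 + 38250 * v2 * v3^2 + 5724 * v2^2 * v3 + 216 * v2^3 + (-229500) * v1 * v3^2 + (-68688) * v1 * v2 * v3 + (-3888) * v1 * v2^2 + 206064 * v1^2 * v3 + 23328 * v1^2 * v2 + (-46656) * v1^3), (5050 * v3^4 + (-75804) * v2 * v3^3 + 6471 * v2^2 * v3^2 + 2340 * v2^3 * v3 + 108 * v2^4 + 421344 * v1 * v3^3 + 37098 * v1 * v2 * v3^2 + (-24948) * v1 * v2^2 * v3 + (-1944) * v1 * v2^3 + (-455544) * v1^2 * v3^2 + 46656 * v1^2 * v2 * v3 + 11664 * v1^2 * v2^2 + 112752 * v1^3 * v3 + (-23328) * v1^3 * v2), (9135 * v3^5 + 33264 * v2 * v3^4 + (-17508) * v2^2 * v3^3 + (-632) * v2^3 * v3^2 + 303 * v2^4 * v3 + 18 * v2^5 + (-189484) * v1 * v3^4 + 58488 * v1 * v2 * v3^3 + 24318 * v1 * v2^2 * v3^2 + (-2592) * v1 * v2^3 * v3 + (-324) * v1 * v2^4 + 245880 * v1^2 * v3^3 + (-108810) * v1^2 * v2 * v3^2 + (-1620) * v1^2 * v2^2 * v3 + 1944 * v1^2 * v2^3 + (-86076) * v1^3 * v3^2 + 37584 * v1^3 * v2 * v3 + (-3888) * v1^3 * v2^2),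 (5184 * v2^2 * v3^4 + (-864) * v2^3 * v3^3 + (-108) * v2^4 * v3^2 + 12 * v2^5 * v3 + 1 * v2^6 + 9135 * v1 * v3^5 + (-28944) * v1 * v2 * v3^4 + (-1956) * v1 * v2^2 * v3^3 + 1960 * v1 * v2^3 * v3^2 + (-57) * v1 * v2^4 * v3 + (-18) * v1 * v2^5 + (-7910) * v1^2 * v3^4 + 40980 * v1^2 * v2 * v3^3 + (-5481) * v1^2 * v2^2 * v3^2 + (-612) * v1^2 * v2^3 * v3 + 108 * v1^2 * v2^4 + (-14346) * v1^3 * v2 * v3^2 + 3132 * v1^3 * v2^2 * v3 + (-216) * v1^3 * v2^3):]"
  by (simp add: poly_eq_poly_eq_iff[symmetric] fun_eq_iff restr_eval feval_F0 algebra_simps power2_eq_square power3_eq_cube power_numeral_reduce)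


lemma mult_at_eqI:
  assumes "\<And>v j. j < m \<Longrightarrow> coeff (restr d F p v) j = 0"
    and "coeff (restr d F p w) m \<noteq> 0"
  shows "mult_at d F p = m"
  unfolding mult_at_def
proof (rule Least_equality)
  show "\<exists>v. coeff (restr d F p v) m \<noteq> 0" using assms(2) by blast
next
  fix y assume "\<exists>v. coeff (restr d F p v) y \<noteq> 0"
  then show "m \<le> y" using assms(1) by (meson not_le)
qed


lemma mult_pt0: "mult_at 6 F0 (0,(-12),1) = 1"
proof (rule mult_at_eqI[where w="(1,0,0)"])
  fix v :: cvec and j :: nat assume "j < 1"
  then have "j = 0" by auto
  then show "coeff (restr 6 F0 (0,(-12),1) v) j = 0" by (cases v) (auto simp only: restr_pt0 coeff_pCons_0 coeff_pCons_Suc One_nat_def numeral_2_eq_2)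
next
  show "coeff (restr 6 F0 (0,(-12),1) (1,0,0)) 1 \<noteq> 0" by (simp add: restr_pt0 numeral_2_eq_2 numeral_3_eq_3)
qed

lemma mult_pt1: "mult_at 6 F0 (0,0,1) = 1"
proof (rule mult_at_eqI[where w="(1,0,0)"])
  fix v :: cvec and j :: nat assume "j < 1"
  then have "j = 0" by auto
  then show "coeff (restr 6 F0 (0,0,1) v) j = 0" by (cases v) (auto simp only: restr_pt1 coeff_pCons_0 coeff_pCons_Suc One_nat_def numeral_2_eq_2)
next
  show "coeff (restr 6 F0 (0,0,1) (1,0,0)) 1 \<noteq> 0" by (simp add: restr_pt1 numeral_2_eq_2 numeral_3_eq_3)
qed

lemma mult_pt2: "mult_at 6 F0 (0,6,1) = 1"
proof (rule mult_at_eqI[where w="(1,0,0)"])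
  fix v :: cvec and j :: nat assume "j < 1"
  then have "j = 0" by auto
  then show "coeff (restr 6 F0 (0,6,1) v) j = 0" by (cases v) (auto simp only: restr_pt2 coeff_pCons_0 coeff_pCons_Suc One_nat_def numeral_2_eq_2)
next
  show "coeff (restr 6 F0 (0,6,1) (1,0,0)) 1 \<noteq> 0" by (simp add: restr_pt2 numeral_2_eq_2 numeral_3_eq_3)
qed

lemma mult_pt3: "mult_at 6 F0 (1,(-5),1) = 2"
proof (rule mult_at_eqI[where w="(0,1,0)"])
  fix v :: cvec and j :: nat assume "j < 2"
  then have "j = 0 \<or> j = 1" by auto
  then show "coeff (restr 6 F0 (1,(-5),1) v) j = 0" by (cases v) (auto simp only: restr_pt3 coeff_pCons_0 coeff_pCons_Suc One_nat_def numeral_2_eq_2)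
next
  show "coeff (restr 6 F0 (1,(-5),1) (0,1,0)) 2 \<noteq> 0" by (simp add: restr_pt3 numeral_2_eq_2 numeral_3_eq_3)
qed

lemma mult_pt4: "mult_at 6 F0 (1,1,1) = 2"
proof (rule mult_at_eqI[where w="(0,1,0)"])
  fix v :: cvec and j :: nat assume "j < 2"
  then have "j = 0 \<or> j = 1" by auto
  then show "coeff (restr 6 F0 (1,1,1) v) j = 0" by (cases v) (auto simp only: restr_pt4 coeff_pCons_0 coeff_pCons_Suc One_nat_def numeral_2_eq_2)
next
  show "coeff (restr 6 F0 (1,1,1) (0,1,0)) 2 \<noteq> 0" by (simp add: restr_pt4 numeral_2_eq_2 numeral_3_eq_3)
qed

lemma mult_pt5: "mult_at 6 F0 (1,7,1) = 2"
proof (rule mult_at_eqI[where w="(0,1,0)"])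
  fix v :: cvec and j :: nat assume "j < 2"
  then have "j = 0 \<or> j = 1" by auto
  then show "coeff (restr 6 F0 (1,7,1) v) j = 0" by (cases v) (auto simp only: restr_pt5 coeff_pCons_0 coeff_pCons_Suc One_nat_def numeral_2_eq_2)
next
  show "coeff (restr 6 F0 (1,7,1) (0,1,0)) 2 \<noteq> 0" by (simp add: restr_pt5 numeral_2_eq_2 numeral_3_eq_3)
qed

lemma mult_pt6: "mult_at 6 F0 (1,0,0) = 3"
proof (rule mult_at_eqI[where w="(0,1,0)"])
  fix v :: cvec and j :: nat assume "j < 3"
  then have "j = 0 \<or> j = 1 \<or> j = 2" by auto
  then show "coeff (restr 6 F0 (1,0,0) v) j = 0" by (cases v) (auto simp only: restr_pt6 coeff_pCons_0 coeff_pCons_Suc One_nat_def numeral_2_eq_2)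
next
  show "coeff (restr 6 F0 (1,0,0) (0,1,0)) 3 \<noteq> 0" by (simp add: restr_pt6 numeral_2_eq_2 numeral_3_eq_3)
qed

lemma mult_pt7: "mult_at 6 F0 (1,6,0) = 3"
proof (rule mult_at_eqI[where w="(0,1,0)"])
  fix v :: cvec and j :: nat assume "j < 3"
  then have "j = 0 \<or> j = 1 \<or> j = 2" by auto
  then show "coeff (restr 6 F0 (1,6,0) v) j = 0" by (cases v) (auto simp only: restr_pt7 coeff_pCons_0 coeff_pCons_Suc One_nat_def numeral_2_eq_2)
next
  show "coeff (restr 6 F0 (1,6,0) (0,1,0)) 3 \<noteq> 0" by (simp add: restr_pt7 numeral_2_eq_2 numeral_3_eq_3)
qed

lemma tan_pt0: "tangent_at 6 F0 (1,0,0) (0,(-12),1)"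
  unfolding tangent_at_def on_line_def cdot_def
proof (intro allI impI)
  fix v :: cvec assume "(case (1::complex,0::complex,0::complex) of (a, b, c) \<Rightarrow> case v of (x, y, z) \<Rightarrow> a * x + b * y + c * z) = 0"
  then show "coeff (restr 6 F0 (0,(-12),1) v) 1 = 0" by (cases v) (simp add: restr_pt0)
qed

lemma tan_pt1: "tangent_at 6 F0 (1,0,0) (0,0,1)"
  unfolding tangent_at_def on_line_def cdot_def
proof (intro allI impI)
  fix v :: cvec assume "(case (1::complex,0::complex,0::complex) of (a, b, c) \<Rightarrow> case v of (x, y, z) \<Rightarrow> a * x + b * y + c * z) = 0"
  then show "coeff (restr 6 F0 (0,0,1) v) 1 = 0" by (cases v) (simp add: restr_pt1)
qed

lemma tan_pt2: "tangent_at 6 F0 (1,0,0) (0,6,1)"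
  unfolding tangent_at_def on_line_def cdot_def
proof (intro allI impI)
  fix v :: cvec assume "(case (1::complex,0::complex,0::complex) of (a, b, c) \<Rightarrow> case v of (x, y, z) \<Rightarrow> a * x + b * y + c * z) = 0"
  then show "coeff (restr 6 F0 (0,6,1) v) 1 = 0" by (cases v) (simp add: restr_pt2)
qed


lemma coeff_restr_a0:
  "coeff (restr d G (p1,0,p3) (0,1,0)) n =
     (\<Sum>(i,j,k)\<in>fmonos d. if j = n then G (i,j,k) * p1^i * p3^k else 0)"
proof -
  have *: "coeff ([:p1:]^i * [:0,1:]^j * [:p3:]^k) n = (if j = n then p1^i * p3^k else 0)" for i j k
  proof -
    have "[:0,1:]^j = monom (1::complex) j" by (simp add: monom_altdef)
    then have "[:p1:]^i * [:0,1:]^j * [:p3:]^k = monom (p1^i * p3^k) j"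
      by (simp add: poly_const_pow smult_monom mult.commute)
    then show ?thesis by (simp add: coeff_monom)
  qed
  show ?thesis
    unfolding restr_def prod.case coeff_sum
    by (intro sum.cong refl) (simp add: * split: prod.splits)
qed

lemma coeff_top:
  assumes supp: "\<forall>m. m \<notin> fmonos d \<longrightarrow> G m = 0"
  shows "coeff (restr d G (p1,0,p3) (0,1,0)) d = G (0,d,0)"
proof -
  have "coeff (restr d G (p1,0,p3) (0,1,0)) d =
     (\<Sum>m\<in>fmonos d. if m = (0,d,0) then G (0,d,0) else 0)"
    unfolding coeff_restr_a0
    by (intro sum.cong refl) (auto simp: fmonos_def split: if_splits)
  also have "\<dots> = G (0,d,0)"
    by (subst sum.delta[OF finite_fmonos]) (simp add: fmonos_def)
  finally show ?thesis .
qed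

lemma coeff_sub:
  assumes supp: "\<forall>m. m \<notin> fmonos d \<longrightarrow> G m = 0" and "d \<ge> 1"
  shows "coeff (restr d G (p1,0,p3) (0,1,0)) (d-1) = G (1,d-1,0) * p1 + G (0,d-1,1) * p3"
proof -
  have "coeff (restr d G (p1,0,p3) (0,1,0)) (d-1) =
     (\<Sum>m\<in>fmonos d. (if m = (1,d-1,0) then G (1,d-1,0) * p1 else 0) +
                      (if m = (0,d-1,1) then G (0,d-1,1) * p3 else 0))"
    unfolding coeff_restr_a0 using assms(2)
    by (intro sum.cong refl) (auto simp: fmonos_def split: if_splits)
  also have "\<dots> = G (1,d-1,0) * p1 + G (0,d-1,1) * p3"
    using assms(2)
    by (simp add: sum.distrib finite_fmonos) (auto simp: fmonos_def)
  finally show ?thesis .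
qed

lemma coeff_high:
  assumes "n > d"
  shows "coeff (restr d G (p1,0,p3) (0,1,0)) n = 0"
  unfolding coeff_restr_a0 using assms
  by (intro sum.neutral) (auto simp: fmonos_def)

lemma degree_restr_a0: "degree (restr d G (p1,0,p3) (0,1,0)) \<le> d"
  by (rule degree_le) (auto intro: coeff_high)

lemma vieta:
  "coeff (\<Prod>x\<in>#A. [:-x,1:]) (size A) = (1::complex) \<and>
   (\<forall>k>size A. coeff (\<Prod>x\<in>#A. [:-x,1:]) k = (0::complex)) \<and>
   (size A \<ge> 1 \<longrightarrow> coeff (\<Prod>x\<in>#A. [:-x,1:]) (size A - 1) = - sum_mset A)"
proof (induction A)
  case empty
  then show ?case by (simp add: coeff_1)
next
  case (add a A)
  let ?P = "\<Prod>x\<in>#A. [:-x,1:]"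
  have eq: "(\<Prod>x\<in>#add_mset a A. [:-x,1:]) = smult (-a) ?P + pCons 0 ?P" by simp
  show ?case
  proof (intro conjI allI impI)
    show "coeff (\<Prod>x\<in>#add_mset a A. [:-x,1:]) (size (add_mset a A)) = 1"
      using add.IH unfolding eq by simp
  next
    fix k assume "size (add_mset a A) < k"
    then obtain k' where k: "k = Suc k'" "k' > size A" by (cases k) auto
    then show "coeff (\<Prod>x\<in>#add_mset a A. [:-x,1:]) k = 0"
      using add.IH unfolding eq by simp
  next
    show "coeff (\<Prod>x\<in>#add_mset a A. [:-x,1:]) (size (add_mset a A) - 1) = - sum_mset (add_mset a A)"
    proof (cases "size A")
      case 0
      then show ?thesis using add.IH unfolding eq by simp
    next
      case (Suc n)
      then show ?thesis using add.IH unfolding eq by (simp add: coeff_pCons split: nat.splits)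
    qed
  qed
qed

lemma msum_mod:
  assumes "\<forall>x\<in>#R. \<exists>k::int. x = 6 * of_int k + c"
  shows "\<exists>k::int. sum_mset R = 6 * of_int k + of_nat (size R) * (c::complex)"
  using assms
proof (induction R)
  case empty
  then show ?case by (auto intro: exI[of _ 0])
next
  case (add a R)
  then obtain k where k: "sum_mset R = 6 * of_int k + of_nat (size R) * c" by auto
  obtain k' where k': "a = 6 * of_int k' + c" using add.prems by auto
  show ?case
    by (rule exI[of _ "k + k'"]) (simp add: k k' algebra_simps)
qed


lemma F0_D': "feval 6 F0 (0,y,z) = y^2*(y+12*z)^2*(y-6*z)^2"
  by (simp add: feval_F0 algebra_simps power2_eq_square power3_eq_cube power_numeral_reduce)
lemma F0_L': "feval 6 F0 (x,y,x) = (y+5*x)^2*(y-x)^2*(y-7*x)^2"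
  by (simp add: feval_F0 algebra_simps power2_eq_square power3_eq_cube power_numeral_reduce)
lemma F0_T': "feval 6 F0 (x,y,0) = y^3*(y-6*x)^3"
  by (simp add: feval_F0 algebra_simps power2_eq_square power3_eq_cube power_numeral_reduce)

lemma F0_nz: "F0 (i,j,k) \<noteq> 0 \<Longrightarrow> i + j + k = 6"
  unfolding F0_def by (simp split: if_splits)

lemma F0_supp': "m \<notin> fmonos 6 \<Longrightarrow> F0 m = 0"
  using F0_nz by (cases m) (auto simp: fmonos_def)

lemma root_sum:
  assumes suppG: "\<forall>m. m \<notin> fmonos d \<longrightarrow> G m = 0" and suppH: "\<forall>m. m \<notin> fmonos e \<longrightarrow> H m = 0"
    and d1: "d \<ge> 1" and de: "d + e = 6"
    and fac: "\<forall>x. feval 6 F0 x = feval d G x * feval e H x"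
  shows "G (0,d,0) \<noteq> 0 \<and> (\<exists>R. size R = d \<and> (\<forall>r\<in>#R. feval 6 F0 (p1, r, p3) = 0) \<and>
          G (1,d-1,0) * p1 + G (0,d-1,1) * p3 = - G (0,d,0) * sum_mset R)"
proof -
  define GP where "GP = restr d G (p1,0,p3) (0,1,0)"
  define HP where "HP = restr e H (p1,0,p3) (0,1,0)"
  define FP where "FP = restr 6 F0 (p1,0,p3) (0,1,0)"
  have FGH: "FP = GP * HP" unfolding FP_def GP_def HP_def by (rule restr_mult) (use fac in auto)
  have supp0: "\<forall>m. m \<notin> fmonos 6 \<longrightarrow> F0 m = 0" using F0_supp' by auto
  have c6: "coeff FP 6 = 1" unfolding FP_def coeff_top[OF supp0] by (simp add: F0_def)
  then have "FP \<noteq> 0" by auto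
  then have nz: "GP \<noteq> 0" "HP \<noteq> 0" using FGH by auto
  have "6 \<le> degree FP" using c6 by (auto intro: le_degree)
  also have "degree FP = degree GP + degree HP" using FGH nz by (simp add: degree_mult_eq)
  finally have "6 \<le> degree GP + degree HP" .
  moreover have "degree GP \<le> d" "degree HP \<le> e" unfolding GP_def HP_def by (rule degree_restr_a0)+
  ultimately have dG: "degree GP = d" using de by linarith
  have lc: "lead_coeff GP = G (0,d,0)" using dG coeff_top[OF suppG] unfolding GP_def by simp
  hence g0: "G (0,d,0) \<noteq> 0" using nz by (metis leading_coeff_0_iff)
  define R where "R = proots GP"
  have sz: "size R = d" using size_proots_complex[of GP] dG R_def by simp
  have dec: "GP = smult (G (0,d,0)) (\<Prod>x\<in>#R. [:-x,1:])"
    using complex_poly_decompose_multiset[of GP] lc R_def by simp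
  have "coeff GP (d-1) = G (0,d,0) * (- sum_mset R)"
    using vieta[of R] sz d1 by (subst dec) simp
  moreover have "coeff GP (d-1) = G (1,d-1,0) * p1 + G (0,d-1,1) * p3"
    unfolding GP_def by (rule coeff_sub[OF suppG d1])
  moreover have "\<forall>r\<in>#R. feval 6 F0 (p1, r, p3) = 0"
  proof
    fix r assume "r \<in># R"
    then have "poly GP r = 0" using nz R_def by simp
    then have "poly FP r = 0" using FGH by simp
    then show "feval 6 F0 (p1,r,p3) = 0" unfolding FP_def by (simp add: restr_eval)
  qed
  ultimately show ?thesis using g0 sz by auto
qed

lemma F0_irr:
  assumes d1: "1 \<le> d1" and d2: "1 \<le> d2" and de: "d1 + d2 = 6"
    and suppG: "\<forall>m. m \<notin> fmonos d1 \<longrightarrow> G m = 0" and suppH: "\<forall>m. m \<notin> fmonos d2 \<longrightarrow> H m = 0"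
    and fac: "\<forall>x. feval 6 F0 x = feval d1 G x * feval d2 H x"
  shows False
proof -
  note rs = root_sum[OF suppG suppH d1 de fac]
  have g0: "G (0,d1,0) \<noteq> 0" using rs by blast
  obtain RD where RD: "size RD = d1" "\<forall>r\<in>#RD. feval 6 F0 (0, r, 1) = 0"
    "G (1,d1-1,0) * 0 + G (0,d1-1,1) * 1 = - G (0,d1,0) * sum_mset RD"
    using rs[of 0 1] by blast
  obtain RL where RL: "size RL = d1" "\<forall>r\<in>#RL. feval 6 F0 (1, r, 1) = 0"
    "G (1,d1-1,0) * 1 + G (0,d1-1,1) * 1 = - G (0,d1,0) * sum_mset RL"
    using rs[of 1 1] by blast
  obtain RT where RT: "size RT = d1" "\<forall>r\<in>#RT. feval 6 F0 (1, r, 0) = 0"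
    "G (1,d1-1,0) * 1 + G (0,d1-1,1) * 0 = - G (0,d1,0) * sum_mset RT"
    using rs[of 1 0] by blast
  have "G (0,d1,0) * (sum_mset RL - sum_mset RD - sum_mset RT) = 0"
    using RD(3) RL(3) RT(3) by (simp add: algebra_simps)
  then have sumeq: "sum_mset RL = sum_mset RD + sum_mset RT" using g0 by (simp add: diff_eq_eq add.commute)
  have "\<forall>r\<in>#RD. \<exists>k::int. r = 6 * of_int k + 0"
  proof
    fix r assume "r \<in># RD"
    then have "r^2*(r+12*1)^2*(r-6*1)^2 = 0" using RD(2) F0_D'[of r 1] by simp
    then have "r = 0 \<or> r + 12 = 0 \<or> r - 6 = 0" by simp
    then have "r = 0 \<or> r = -12 \<or> r = 6" by (auto simp: add_eq_0_iff2)
    then show "\<exists>k::int. r = 6 * of_int k + 0"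
      by (elim disjE) (auto intro: exI[of _ 0] exI[of _ "-2"] exI[of _ 1])
  qed
  from msum_mod[OF this] obtain kD where kD: "sum_mset RD = 6 * of_int kD" by auto
  have "\<forall>r\<in>#RT. \<exists>k::int. r = 6 * of_int k + 0"
  proof
    fix r assume "r \<in># RT"
    then have "r^3*(r-6*1)^3 = 0" using RT(2) F0_T'[of 1 r] by simp
    then have "r = 0 \<or> r = 6" by simp
    then show "\<exists>k::int. r = 6 * of_int k + 0"
      by (elim disjE) (auto intro: exI[of _ 0] exI[of _ 1])
  qed
  from msum_mod[OF this] obtain kT where kT: "sum_mset RT = 6 * of_int kT" by auto
  have "\<forall>r\<in>#RL. \<exists>k::int. r = 6 * of_int k + 1"
  proof
    fix r assume "r \<in># RL"
    then have "(r+5*1)^2*(r-1)^2*(r-7*1)^2 = 0" using RL(2) F0_L'[of 1 r] by simp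
    then have "r + 5 = 0 \<or> r - 1 = 0 \<or> r - 7 = 0" by simp
    then have "r = -5 \<or> r = 1 \<or> r = 7" by (auto simp: add_eq_0_iff2)
    then show "\<exists>k::int. r = 6 * of_int k + 1"
      by (elim disjE) (auto intro: exI[of _ "-1"] exI[of _ 0] exI[of _ 1])
  qed
  from msum_mod[OF this] obtain kL where kL: "sum_mset RL = 6 * of_int kL + of_nat d1"
    using RL(1) by auto
  have "(of_int (6 * kL + int d1) :: complex) = of_int (6 * kD + 6 * kT)"
    using sumeq kD kT kL by simp
  then have "6 * kL + int d1 = 6 * kD + 6 * kT" by (simp only: of_int_eq_iff)
  then show False using d1 d2 de by presburger
qed


definition ring_set :: "complex set \<Rightarrow> bool" where
  "ring_set K \<longleftrightarrow> 0 \<in> K \<and> 1 \<in> K \<and> (\<forall>a\<in>K. \<forall>b\<in>K. a + b \<in> K \<and> a * b \<in> K)"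

lemma ring_set_UNIV: "ring_set UNIV" by (simp add: ring_set_def)
lemma ring_set_Rats: "ring_set \<rat>" by (simp add: ring_set_def)

definition hpK :: "complex set \<Rightarrow> nat \<Rightarrow> (cvec \<Rightarrow> complex) \<Rightarrow> bool" where
  "hpK K d f \<longleftrightarrow> (\<exists>C. (\<forall>m. m \<notin> fmonos d \<longrightarrow> C m = 0) \<and> (\<forall>m. C m \<in> K) \<and> (\<forall>X. f X = feval d C X))"

lemma feval_add: "feval d (\<lambda>m. C1 m + C2 m) X = feval d C1 X + feval d C2 X"
  unfolding feval_def by (auto simp: sum.distrib[symmetric] algebra_simps intro!: sum.cong split: prod.splits)

lemma feval_scale: "feval d (\<lambda>m. c * C m) X = c * feval d C X"
  unfolding feval_def by (auto simp: sum_distrib_left algebra_simps intro!: sum.cong split: prod.splits)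

lemma hp_zero: "ring_set K \<Longrightarrow> hpK K d (\<lambda>X. 0)"
  unfolding hpK_def ring_set_def
  by (rule exI[of _ "\<lambda>m. 0"]) (simp add: feval_def split: prod.splits)

lemma hp_add: "ring_set K \<Longrightarrow> hpK K d f \<Longrightarrow> hpK K d g \<Longrightarrow> hpK K d (\<lambda>X. f X + g X)"
  unfolding hpK_def ring_set_def
proof (elim exE conjE)
  fix C1 C2 assume K: "0 \<in> K" "1 \<in> K" "\<forall>a\<in>K. \<forall>b\<in>K. a + b \<in> K \<and> a * b \<in> K"
    and h: "\<forall>m. m \<notin> fmonos d \<longrightarrow> C1 m = 0" "\<forall>m. C1 m \<in> K" "\<forall>X. f X = feval d C1 X"
       "\<forall>m. m \<notin> fmonos d \<longrightarrow> C2 m = 0" "\<forall>m. C2 m \<in> K" "\<forall>X. g X = feval d C2 X"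
  show "\<exists>C. (\<forall>m. m \<notin> fmonos d \<longrightarrow> C m = 0) \<and> (\<forall>m. C m \<in> K) \<and> (\<forall>X. f X + g X = feval d C X)"
    by (rule exI[of _ "\<lambda>m. C1 m + C2 m"]) (use K h in \<open>simp add: feval_add\<close>)
qed

lemma hp_scale: "ring_set K \<Longrightarrow> c \<in> K \<Longrightarrow> hpK K d f \<Longrightarrow> hpK K d (\<lambda>X. c * f X)"
  unfolding hpK_def ring_set_def
proof (elim exE conjE)
  fix C1 assume K: "0 \<in> K" "1 \<in> K" "\<forall>a\<in>K. \<forall>b\<in>K. a + b \<in> K \<and> a * b \<in> K" and c: "c \<in> K"
    and h: "\<forall>m. m \<notin> fmonos d \<longrightarrow> C1 m = 0" "\<forall>m. C1 m \<in> K" "\<forall>X. f X = feval d C1 X"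
  show "\<exists>C. (\<forall>m. m \<notin> fmonos d \<longrightarrow> C m = 0) \<and> (\<forall>m. C m \<in> K) \<and> (\<forall>X. c * f X = feval d C X)"
    by (rule exI[of _ "\<lambda>m. c * C1 m"]) (use K h c in \<open>simp add: feval_scale\<close>)
qed

lemma hp_cong: "hpK K d f \<Longrightarrow> (\<And>X. f X = g X) \<Longrightarrow> hpK K d g"
  unfolding hpK_def by auto

lemma hp_one: "ring_set K \<Longrightarrow> hpK K 0 (\<lambda>X. 1)"
  unfolding hpK_def ring_set_def
proof (intro exI[of _ "\<lambda>m. if m = (0,0,0) then 1 else 0"] conjI allI impI)
  have f0: "fmonos 0 = {(0,0,0)}" by (auto simp: fmonos_def)
  fix X :: cvec show "1 = feval 0 (\<lambda>m. if m = (0, 0, 0) then 1 else 0) X"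
    by (cases X) (simp add: feval_def f0)
qed (auto simp: fmonos_def)

lemma feval_shift:
  fixes s :: "nat \<times> nat \<times> nat \<Rightarrow> nat \<times> nat \<times> nat"
  assumes inj: "inj s" and sub: "s ` fmonos d \<subseteq> fmonos (Suc d)"
    and C'1: "\<And>m. C' (s m) = C m"
    and C'2: "\<And>m. m \<in> fmonos (Suc d) \<Longrightarrow> m \<notin> s ` fmonos d \<Longrightarrow> C' m = 0"
    and mon: "\<And>i j k i' j' k'. s (i,j,k) = (i',j',k') \<Longrightarrow> x^i' * y^j' * z^k' = w * (x^i * y^j * z^k)"
  shows "feval (Suc d) C' (x,y,z) = w * feval d C (x,y,z)"
proof -
  let ?g = "\<lambda>(i,j,k). C' (i,j,k) * x^i * y^j * z^k"
  have "feval (Suc d) C' (x,y,z) = sum ?g (fmonos (Suc d))" by (simp add: feval_def)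
  also have "\<dots> = sum ?g (s ` fmonos d)"
    by (rule sum.mono_neutral_right[OF finite_fmonos sub]) (auto dest: C'2)
  also have "\<dots> = sum (?g \<circ> s) (fmonos d)"
    by (rule sum.reindex) (use inj in \<open>auto intro: inj_on_subset\<close>)
  also have "\<dots> = sum (\<lambda>m. w * (case m of (i,j,k) \<Rightarrow> C (i,j,k) * x^i * y^j * z^k)) (fmonos d)"
  proof (intro sum.cong refl)
    fix m assume "m \<in> fmonos d"
    obtain i j k where m: "m = (i,j,k)" by (cases m)
    obtain i' j' k' where s: "s (i,j,k) = (i',j',k')" by (cases "s (i,j,k)")
    have "C' (i',j',k') = C (i,j,k)" using C'1[of "(i,j,k)"] s by simp
    then show "(?g \<circ> s) m = w * (case m of (i,j,k) \<Rightarrow> C (i,j,k) * x^i * y^j * z^k)"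
      using mon[OF s] by (simp add: m s mult.assoc mult.left_commute)
  qed
  also have "\<dots> = w * feval d C (x,y,z)" by (simp add: feval_def sum_distrib_left)
  finally show ?thesis .
qed


lemma hp_mul_x:
  assumes K: "ring_set K" and h: "hpK K d f"
  shows "hpK K (Suc d) (\<lambda>X. (case X of (x,y,z) \<Rightarrow> x) * f X)"
proof -
  from h obtain C where C: "\<forall>m. m \<notin> fmonos d \<longrightarrow> C m = 0" "\<forall>m. C m \<in> K" "\<forall>X. f X = feval d C X"
    unfolding hpK_def by blast
  define C' where "C' = (\<lambda>(i,j,k). if i \<ge> 1 then C (i-1,j,k) else (0::complex))"
  define s where "s = (\<lambda>(i::nat,j::nat,k::nat). (Suc i,j,k))"
  have inj: "inj s" unfolding s_def by (auto simp: inj_def)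
  have sub: "s ` fmonos d \<subseteq> fmonos (Suc d)" unfolding s_def fmonos_def by auto
  have C'1: "C' (s m) = C m" for m unfolding s_def C'_def by (cases m) auto
  have C'2: "C' m = 0" if "m \<in> fmonos (Suc d)" "m \<notin> s ` fmonos d" for m
  proof (cases m)
    case (fields i j k)
    show ?thesis
    proof (rule ccontr)
      assume "C' m \<noteq> 0"
      then have c: "i \<ge> 1" using fields unfolding C'_def by (auto split: if_splits)
      have "(i-1,j,k) \<in> fmonos d" using that(1) c fields by (auto simp: fmonos_def)
      moreover have "m = s (i-1,j,k)" using c fields unfolding s_def by auto
      ultimately show False using that(2) by auto
    qed
  qed
  have "\<forall>m. m \<notin> fmonos (Suc d) \<longrightarrow> C' m = 0"
  proof (intro allI impI)
    fix m assume m: "m \<notin> fmonos (Suc d)"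
    obtain i j k where mm: "m = (i,j,k)" by (cases m)
    show "C' m = 0"
    proof (rule ccontr)
      assume "C' m \<noteq> 0"
      then have "i \<ge> 1" "C (i-1,j,k) \<noteq> 0" using mm unfolding C'_def by (auto split: if_splits)
      then show False using C(1) m mm by (auto simp: fmonos_def)
    qed
  qed
  moreover have "\<forall>m. C' m \<in> K" using C(2) K unfolding C'_def ring_set_def by auto
  moreover have "\<forall>X. (case X of (x,y,z) \<Rightarrow> x) * f X = feval (Suc d) C' X"
  proof
    fix X :: cvec
    obtain x y z where X: "X = (x,y,z)" by (cases X)
    have "feval (Suc d) C' (x,y,z) = x * feval d C (x,y,z)"
      by (rule feval_shift[where s=s and C'=C' and C=C and d=d, OF inj sub C'1 C'2]) (auto simp: s_def)
    then show "(case X of (x,y,z) \<Rightarrow> x) * f X = feval (Suc d) C' X" using C(3) X by simp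
  qed
  ultimately show ?thesis unfolding hpK_def by blast
qed

lemma hp_mul_y:
  assumes K: "ring_set K" and h: "hpK K d f"
  shows "hpK K (Suc d) (\<lambda>X. (case X of (x,y,z) \<Rightarrow> y) * f X)"
proof -
  from h obtain C where C: "\<forall>m. m \<notin> fmonos d \<longrightarrow> C m = 0" "\<forall>m. C m \<in> K" "\<forall>X. f X = feval d C X"
    unfolding hpK_def by blast
  define C' where "C' = (\<lambda>(i,j,k). if j \<ge> 1 then C (i,j-1,k) else (0::complex))"
  define s where "s = (\<lambda>(i::nat,j::nat,k::nat). (i,Suc j,k))"
  have inj: "inj s" unfolding s_def by (auto simp: inj_def)
  have sub: "s ` fmonos d \<subseteq> fmonos (Suc d)" unfolding s_def fmonos_def by auto
  have C'1: "C' (s m) = C m" for m unfolding s_def C'_def by (cases m) auto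
  have C'2: "C' m = 0" if "m \<in> fmonos (Suc d)" "m \<notin> s ` fmonos d" for m
  proof (cases m)
    case (fields i j k)
    show ?thesis
    proof (rule ccontr)
      assume "C' m \<noteq> 0"
      then have c: "j \<ge> 1" using fields unfolding C'_def by (auto split: if_splits)
      have "(i,j-1,k) \<in> fmonos d" using that(1) c fields by (auto simp: fmonos_def)
      moreover have "m = s (i,j-1,k)" using c fields unfolding s_def by auto
      ultimately show False using that(2) by auto
    qed
  qed
  have "\<forall>m. m \<notin> fmonos (Suc d) \<longrightarrow> C' m = 0"
  proof (intro allI impI)
    fix m assume m: "m \<notin> fmonos (Suc d)"
    obtain i j k where mm: "m = (i,j,k)" by (cases m)
    show "C' m = 0"
    proof (rule ccontr)
      assume "C' m \<noteq> 0"
      then have "j \<ge> 1" "C (i,j-1,k) \<noteq> 0" using mm unfolding C'_def by (auto split: if_splits)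
      then show False using C(1) m mm by (auto simp: fmonos_def)
    qed
  qed
  moreover have "\<forall>m. C' m \<in> K" using C(2) K unfolding C'_def ring_set_def by auto
  moreover have "\<forall>X. (case X of (x,y,z) \<Rightarrow> y) * f X = feval (Suc d) C' X"
  proof
    fix X :: cvec
    obtain x y z where X: "X = (x,y,z)" by (cases X)
    have "feval (Suc d) C' (x,y,z) = y * feval d C (x,y,z)"
      by (rule feval_shift[where s=s and C'=C' and C=C and d=d, OF inj sub C'1 C'2]) (auto simp: s_def)
    then show "(case X of (x,y,z) \<Rightarrow> y) * f X = feval (Suc d) C' X" using C(3) X by simp
  qed
  ultimately show ?thesis unfolding hpK_def by blast
qed

lemma hp_mul_z:
  assumes K: "ring_set K" and h: "hpK K d f"
  shows "hpK K (Suc d) (\<lambda>X. (case X of (x,y,z) \<Rightarrow> z) * f X)"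
proof -
  from h obtain C where C: "\<forall>m. m \<notin> fmonos d \<longrightarrow> C m = 0" "\<forall>m. C m \<in> K" "\<forall>X. f X = feval d C X"
    unfolding hpK_def by blast
  define C' where "C' = (\<lambda>(i,j,k). if k \<ge> 1 then C (i,j,k-1) else (0::complex))"
  define s where "s = (\<lambda>(i::nat,j::nat,k::nat). (i,j,Suc k))"
  have inj: "inj s" unfolding s_def by (auto simp: inj_def)
  have sub: "s ` fmonos d \<subseteq> fmonos (Suc d)" unfolding s_def fmonos_def by auto
  have C'1: "C' (s m) = C m" for m unfolding s_def C'_def by (cases m) auto
  have C'2: "C' m = 0" if "m \<in> fmonos (Suc d)" "m \<notin> s ` fmonos d" for m
  proof (cases m)
    case (fields i j k)
    show ?thesis
    proof (rule ccontr)
      assume "C' m \<noteq> 0"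
      then have c: "k \<ge> 1" using fields unfolding C'_def by (auto split: if_splits)
      have "(i,j,k-1) \<in> fmonos d" using that(1) c fields by (auto simp: fmonos_def)
      moreover have "m = s (i,j,k-1)" using c fields unfolding s_def by auto
      ultimately show False using that(2) by auto
    qed
  qed
  have "\<forall>m. m \<notin> fmonos (Suc d) \<longrightarrow> C' m = 0"
  proof (intro allI impI)
    fix m assume m: "m \<notin> fmonos (Suc d)"
    obtain i j k where mm: "m = (i,j,k)" by (cases m)
    show "C' m = 0"
    proof (rule ccontr)
      assume "C' m \<noteq> 0"
      then have "k \<ge> 1" "C (i,j,k-1) \<noteq> 0" using mm unfolding C'_def by (auto split: if_splits)
      then show False using C(1) m mm by (auto simp: fmonos_def)
    qed
  qed
  moreover have "\<forall>m. C' m \<in> K" using C(2) K unfolding C'_def ring_set_def by auto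
  moreover have "\<forall>X. (case X of (x,y,z) \<Rightarrow> z) * f X = feval (Suc d) C' X"
  proof
    fix X :: cvec
    obtain x y z where X: "X = (x,y,z)" by (cases X)
    have "feval (Suc d) C' (x,y,z) = z * feval d C (x,y,z)"
      by (rule feval_shift[where s=s and C'=C' and C=C and d=d, OF inj sub C'1 C'2]) (auto simp: s_def)
    then show "(case X of (x,y,z) \<Rightarrow> z) * f X = feval (Suc d) C' X" using C(3) X by simp
  qed
  ultimately show ?thesis unfolding hpK_def by blast
qed


definition vin :: "complex set \<Rightarrow> cvec \<Rightarrow> bool" where
  "vin K l \<longleftrightarrow> (case l of (a,b,c) \<Rightarrow> a \<in> K \<and> b \<in> K \<and> c \<in> K)"

lemma hp_mul_lin:
  assumes K: "ring_set K" and l: "vin K l" and h: "hpK K d f"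
  shows "hpK K (Suc d) (\<lambda>X. cdot l X * f X)"
proof -
  obtain a b c where lab: "l = (a,b,c)" by (cases l)
  have abc: "a \<in> K" "b \<in> K" "c \<in> K" using l lab by (auto simp: vin_def)
  have "hpK K (Suc d) (\<lambda>X. a * ((case X of (x,y,z) \<Rightarrow> x) * f X) +
          (b * ((case X of (x,y,z) \<Rightarrow> y) * f X) + c * ((case X of (x,y,z) \<Rightarrow> z) * f X)))"
    by (intro hp_add hp_scale hp_mul_x hp_mul_y hp_mul_z K h abc)
  then show ?thesis
    by (rule hp_cong) (auto simp: lab cdot_def algebra_simps split: prod.splits)
qed

lemma hp_pow:
  assumes K: "ring_set K" and l: "vin K l" and h: "hpK K d f"
  shows "hpK K (d + n) (\<lambda>X. cdot l X ^ n * f X)"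
proof (induction n)
  case 0
  then show ?case using h by simp
next
  case (Suc n)
  have "hpK K (Suc (d + n)) (\<lambda>X. cdot l X * (cdot l X ^ n * f X))"
    by (rule hp_mul_lin[OF K l Suc])
  then have "hpK K (d + Suc n) (\<lambda>X. cdot l X * (cdot l X ^ n * f X))" by simp
  then show ?case by (rule hp_cong) (simp add: mult.assoc)
qed

lemma hp_monomial:
  assumes K: "ring_set K" and l: "vin K l1" "vin K l2" "vin K l3"
  shows "hpK K (i + j + k) (\<lambda>X. cdot l1 X ^ i * cdot l2 X ^ j * cdot l3 X ^ k)"
proof -
  have "hpK K (0 + k) (\<lambda>X. cdot l3 X ^ k * 1)" by (rule hp_pow[OF K l(3) hp_one[OF K]])
  then have "hpK K (0 + k + j) (\<lambda>X. cdot l2 X ^ j * (cdot l3 X ^ k * 1))" by (rule hp_pow[OF K l(2)])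
  then have "hpK K (0 + k + j + i) (\<lambda>X. cdot l1 X ^ i * (cdot l2 X ^ j * (cdot l3 X ^ k * 1)))"
    by (rule hp_pow[OF K l(1)])
  moreover have "0 + k + j + i = i + j + k" by simp
  ultimately have "hpK K (i + j + k) (\<lambda>X. cdot l1 X ^ i * (cdot l2 X ^ j * (cdot l3 X ^ k * 1)))" by (simp add: add.commute add.left_commute)
  then show ?thesis by (rule hp_cong) (simp add: mult.assoc)
qed

lemma hp_sum:
  assumes K: "ring_set K" and fin: "finite A" and h: "\<forall>a\<in>A. hpK K d (f a)"
  shows "hpK K d (\<lambda>X. \<Sum>a\<in>A. f a X)"
  using fin h
proof (induction A rule: finite_induct)
  case empty
  then show ?case using hp_zero[OF K] by simp
next
  case (insert x F)
  have "hpK K d (\<lambda>X. f x X + (\<Sum>a\<in>F. f a X))"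
    using insert by (intro hp_add K) auto
  then show ?case using insert by simp
qed

lemma hp_compose:
  assumes K: "ring_set K" and supp: "\<forall>m. m \<notin> fmonos d \<longrightarrow> C m = 0" and CK: "\<forall>m. C m \<in> K"
    and l: "vin K l1" "vin K l2" "vin K l3"
  shows "hpK K d (\<lambda>X. feval d C (cdot l1 X, cdot l2 X, cdot l3 X))"
proof -
  have "hpK K d (\<lambda>X. \<Sum>m\<in>fmonos d. (case m of (i,j,k) \<Rightarrow> C (i,j,k) * (cdot l1 X ^ i * cdot l2 X ^ j * cdot l3 X ^ k)))"
  proof (rule hp_sum[OF K finite_fmonos], intro ballI)
    fix m assume m: "m \<in> fmonos d"
    obtain i j k where mm: "m = (i,j,k)" by (cases m)
    have d: "d = i + j + k" using m mm by (simp add: fmonos_def)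
    show "hpK K d (\<lambda>X. case m of (i,j,k) \<Rightarrow> C (i,j,k) * (cdot l1 X ^ i * cdot l2 X ^ j * cdot l3 X ^ k))"
      unfolding mm prod.case d by (rule hp_scale[OF K _ hp_monomial[OF K l]]) (use CK in auto)
  qed
  then show ?thesis
    by (rule hp_cong) (simp add: feval_def mult.assoc split: prod.splits)
qed


definition lin :: "cvec \<Rightarrow> cvec \<Rightarrow> cvec \<Rightarrow> cvec \<Rightarrow> cvec" where
  "lin r1 r2 r3 X = (cdot r1 X, cdot r2 X, cdot r3 X)"

definition sirr :: "nat \<Rightarrow> tform \<Rightarrow> bool" where
  "sirr d F \<longleftrightarrow> \<not> (\<exists>d1 d2 G H. 1 \<le> d1 \<and> 1 \<le> d2 \<and> d1 + d2 = d \<and>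
      (\<forall>m. m \<notin> fmonos d1 \<longrightarrow> G m = 0) \<and> (\<forall>m. m \<notin> fmonos d2 \<longrightarrow> H m = 0) \<and>
      (\<forall>x. feval d F x = feval d1 G x * feval d2 H x))"

lemma sirr_F0: "sirr 6 F0"
  unfolding sirr_def using F0_irr by blast

lemma cdot_lin_comb: "cdot r (p1 + t*v1, p2 + t*v2, p3 + t*v3) = cdot r (p1,p2,p3) + t * cdot r (v1,v2,v3)"
  by (cases r) (simp add: cdot_def algebra_simps)

lemma cdot_vscale: "cdot r (vscale c X) = c * cdot r X"
  by (cases r; cases X) (simp add: cdot_def vscale_def algebra_simps)

lemma cdot_zero: "cdot r (0,0,0) = 0"
  by (cases r) (simp add: cdot_def)

lemma lin_vscale: "lin r1 r2 r3 (vscale c X) = vscale c (lin r1 r2 r3 X)"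
  unfolding lin_def cdot_vscale by (simp add: vscale_def)

lemma lin_zero: "lin r1 r2 r3 (0,0,0) = (0,0,0)"
  by (simp add: lin_def cdot_zero)

lemma feval_vscale: "feval d F (vscale c X) = c^d * feval d F X"
proof -
  obtain x y z where X: "X = (x,y,z)" by (cases X)
  have vs: "vscale c X = (c*x, c*y, c*z)" by (simp add: X vscale_def)
  have "feval d F (vscale c X) = (\<Sum>(i,j,k)\<in>fmonos d. c^d * (F (i,j,k) * x^i * y^j * z^k))"
    unfolding vs feval_def prod.case
    by (intro sum.cong refl) (auto simp: fmonos_def power_mult_distrib power_add)
  also have "\<dots> = c^d * feval d F X"
    unfolding X feval_def prod.case sum_distrib_left by (intro sum.cong refl) auto
  finally show ?thesis .
qed

locale lintr =
  fixes r1 r2 r3 s1 s2 s3 :: cvec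
  assumes inv1: "\<And>X. lin r1 r2 r3 (lin s1 s2 s3 X) = X"
    and inv2: "\<And>X. lin s1 s2 s3 (lin r1 r2 r3 X) = X"
begin

abbreviation "\<psi> \<equiv> lin r1 r2 r3"
abbreviation "\<phi> \<equiv> lin s1 s2 s3"

lemma restr_tr:
  assumes F: "\<And>X. feval d F' X = feval d F (\<psi> X)"
  shows "restr d F' p v = restr d F (\<psi> p) (\<psi> v)"
proof -
  obtain p1 p2 p3 where p: "p = (p1,p2,p3)" by (cases p)
  obtain v1 v2 v3 where v: "v = (v1,v2,v3)" by (cases v)
  show ?thesis unfolding p v lin_def
    by (rule restr_eqI) (simp add: F lin_def cdot_lin_comb)
qed

lemma mult_tr:
  assumes F: "\<And>X. feval d F' X = feval d F (\<psi> X)"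
  shows "mult_at d F' p = mult_at d F (\<psi> p)"
proof -
  have "(\<exists>v. coeff (restr d F' p v) m \<noteq> 0) \<longleftrightarrow> (\<exists>w. coeff (restr d F (\<psi> p) w) m \<noteq> 0)" for m
    unfolding restr_tr[OF F] by (metis inv1)
  then show ?thesis unfolding mult_at_def by simp
qed

lemma tangent_tr:
  assumes F: "\<And>X. feval d F' X = feval d F (\<psi> X)"
    and l: "\<And>X. on_line l' X \<longleftrightarrow> on_line l (\<psi> X)"
  shows "tangent_at d F' l' p \<longleftrightarrow> tangent_at d F l (\<psi> p)"
  unfolding tangent_at_def restr_tr[OF F] l by (metis inv1)

lemma nonzero_tr: "nonzero X \<Longrightarrow> nonzero (\<phi> X)"
proof -
  assume "nonzero X"
  moreover have "X = (0,0,0)" if h: "\<phi> X = (0,0,0)"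
  proof -
    have "X = \<psi> (\<phi> X)" by (simp add: inv1)
    also have "\<dots> = (0,0,0)" using h lin_zero by simp
    finally show ?thesis .
  qed
  ultimately show ?thesis unfolding nonzero_def by blast
qed

lemma nonzero_tr2: "nonzero X \<Longrightarrow> nonzero (\<psi> X)"
proof -
  assume "nonzero X"
  moreover have "X = (0,0,0)" if h: "\<psi> X = (0,0,0)"
  proof -
    have "X = \<phi> (\<psi> X)" by (simp add: inv2)
    also have "\<dots> = (0,0,0)" using h lin_zero by simp
    finally show ?thesis .
  qed
  ultimately show ?thesis unfolding nonzero_def by blast
qed

lemma inj_phi: "inj \<phi>"
proof (rule injI)
  fix x y assume "\<phi> x = \<phi> y"
  then have "\<psi> (\<phi> x) = \<psi> (\<phi> y)" by simp
  then show "x = y" by (simp add: inv1)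
qed

lemma meets_tr:
  assumes F: "\<And>X. feval d F' X = feval d F (\<psi> X)"
    and l: "\<And>X. on_line l' X \<longleftrightarrow> on_line l (\<psi> X)"
    and M: "meets_in d F l P"
  shows "meets_in d F' l' (\<phi> ` P)"
  unfolding meets_in_def
proof (intro conjI)
  show "\<forall>p\<in>\<phi> ` P. nonzero p \<and> on_line l' p \<and> feval d F' p = 0"
  proof
  fix p assume "p \<in> \<phi> ` P"
  then obtain q where q: "q \<in> P" "p = \<phi> q" by auto
  then show "nonzero p \<and> on_line l' p \<and> feval d F' p = 0"
    using M unfolding meets_in_def by (auto simp: F l inv1 nonzero_tr)
  qed
next
  show "\<forall>p\<in>\<phi> ` P. \<forall>q\<in>\<phi> ` P. proj_eq p q \<longrightarrow> p = q"
  proof (intro ballI impI)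
  fix p q assume "p \<in> \<phi> ` P" "q \<in> \<phi> ` P" "proj_eq p q"
  then obtain p' q' where pq: "p' \<in> P" "p = \<phi> p'" "q' \<in> P" "q = \<phi> q'" by auto
  from \<open>proj_eq p q\<close> obtain c where c: "c \<noteq> 0" "q = vscale c p" unfolding proj_eq_def by auto
  have "q' = vscale c p'" using c pq by (metis inv1 lin_vscale)
  then have "proj_eq p' q'" using c unfolding proj_eq_def by auto
  then show "p = q" using M pq unfolding meets_in_def by auto
  qed
next
  show "\<forall>q. nonzero q \<and> on_line l' q \<and> feval d F' q = 0 \<longrightarrow> (\<exists>p\<in>\<phi> ` P. proj_eq p q)"
  proof (intro allI impI)
  fix q assume "nonzero q \<and> on_line l' q \<and> feval d F' q = 0"
  then have "nonzero (\<psi> q) \<and> on_line l (\<psi> q) \<and> feval d F (\<psi> q) = 0"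
    by (auto simp: F l nonzero_tr2)
  then obtain p where p: "p \<in> P" "proj_eq p (\<psi> q)" using M unfolding meets_in_def by blast
  then obtain c where c: "c \<noteq> 0" "\<psi> q = vscale c p" unfolding proj_eq_def by auto
  have "q = vscale c (\<phi> p)" by (metis c(2) inv2 lin_vscale)
  then show "\<exists>p\<in>\<phi> ` P. proj_eq p q" using p c unfolding proj_eq_def by auto
  qed
qed

lemma card_tr: "card (\<phi> ` P) = card P"
  by (rule card_image) (use inj_phi in \<open>auto intro: inj_on_subset\<close>)

lemma sirr_tr:
  assumes F: "\<And>X. feval d F' X = feval d F (\<psi> X)"
    and irr: "sirr d F"
  shows "sirr d F'"
  unfolding sirr_def
proof
  assume "\<exists>d1 d2 G H. 1 \<le> d1 \<and> 1 \<le> d2 \<and> d1 + d2 = d \<and>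
      (\<forall>m. m \<notin> fmonos d1 \<longrightarrow> G m = 0) \<and> (\<forall>m. m \<notin> fmonos d2 \<longrightarrow> H m = 0) \<and>
      (\<forall>x. feval d F' x = feval d1 G x * feval d2 H x)"
  then obtain d1 d2 G H where h: "1 \<le> d1" "1 \<le> d2" "d1 + d2 = d"
    "\<forall>m. m \<notin> fmonos d1 \<longrightarrow> G m = 0" "\<forall>m. m \<notin> fmonos d2 \<longrightarrow> H m = 0"
    "\<forall>x. feval d F' x = feval d1 G x * feval d2 H x" by blast
  have vs: "vin UNIV s1" "vin UNIV s2" "vin UNIV s3" by (auto simp: vin_def split: prod.splits)
  obtain G' where G': "\<forall>m. m \<notin> fmonos d1 \<longrightarrow> G' m = 0" "\<forall>X. feval d1 G (\<phi> X) = feval d1 G' X"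
    using hp_compose[OF ring_set_UNIV h(4) _ vs] unfolding hpK_def lin_def by auto
  obtain H' where H': "\<forall>m. m \<notin> fmonos d2 \<longrightarrow> H' m = 0" "\<forall>X. feval d2 H (\<phi> X) = feval d2 H' X"
    using hp_compose[OF ring_set_UNIV h(5) _ vs] unfolding hpK_def lin_def by auto
  have "\<forall>x. feval d F x = feval d1 G' x * feval d2 H' x"
  proof
    fix x
    have "feval d F x = feval d F' (\<phi> x)" by (simp add: F inv1)
    then show "feval d F x = feval d1 G' x * feval d2 H' x" using h(6) G'(2) H'(2) by simp
  qed
  then show False using irr h G'(1) H'(1) unfolding sirr_def by blast
qed

end


lemma sq_prod_zero: "(a::complex)^2 * b^2 * c^2 = 0 \<longleftrightarrow> a = 0 \<or> b = 0 \<or> c = 0" by simp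

lemma meets_D0: "meets_in 6 F0 (1,0,0) {(0,-12,1),(0,0,1),(0,6,1)}"
  unfolding meets_in_def
proof (intro conjI)
  show "\<forall>p\<in>{(0,-12,1),(0,0,1),(0,6,1)}. nonzero p \<and> on_line (1,0,0) p \<and> feval 6 F0 p = 0"
    by (auto simp: nonzero_def on_line_def cdot_def F0_D')
  show "\<forall>p\<in>{(0,-12,1),(0,0,1),(0,6,1)}. \<forall>q\<in>{(0,-12,1),(0,0,1),(0,6,1)}. proj_eq p q \<longrightarrow> p = q"
    by (auto simp: proj_eq_def vscale_def)
  show "\<forall>q. nonzero q \<and> on_line (1,0,0) q \<and> feval 6 F0 q = 0 \<longrightarrow> (\<exists>p\<in>{(0,-12,1),(0,0,1),(0,6,1)}. proj_eq p q)"
  proof (intro allI impI)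
    fix q :: cvec assume h: "nonzero q \<and> on_line (1,0,0) q \<and> feval 6 F0 q = 0"
    obtain x y z where q: "q = (x,y,z)" by (cases q)
    have x: "x = 0" using h q by (simp add: on_line_def cdot_def)
    have "y^2*(y+12*z)^2*(y-6*z)^2 = 0" using h q x F0_D'[of y z] by simp
    then have y: "y = 0 \<or> y = -12*z \<or> y = 6*z" by (auto simp: add_eq_0_iff2)
    have z: "z \<noteq> 0" using h q x y by (auto simp: nonzero_def)
    show "\<exists>p\<in>{(0,-12,1),(0,0,1),(0,6,1)}. proj_eq p q"
      using y
    proof (elim disjE)
      assume "y = 0" then show ?thesis using z q x by (auto simp: proj_eq_def vscale_def intro!: exI[of _ z])
    next
      assume "y = -12*z" then show ?thesis using z q x by (auto simp: proj_eq_def vscale_def intro!: exI[of _ z])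
    next
      assume "y = 6*z" then show ?thesis using z q x by (auto simp: proj_eq_def vscale_def intro!: exI[of _ z])
    qed
  qed
qed

lemma meets_L0: "meets_in 6 F0 (1,0,-1) {(1,-5,1),(1,1,1),(1,7,1)}"
  unfolding meets_in_def
proof (intro conjI)
  show "\<forall>p\<in>{(1,-5,1),(1,1,1),(1,7,1)}. nonzero p \<and> on_line (1,0,-1) p \<and> feval 6 F0 p = 0"
    using F0_L'[of 1] by (auto simp: nonzero_def on_line_def cdot_def)
  show "\<forall>p\<in>{(1,-5,1),(1,1,1),(1,7,1)}. \<forall>q\<in>{(1,-5,1),(1,1,1),(1,7,1)}. proj_eq p q \<longrightarrow> p = q"
    by (auto simp: proj_eq_def vscale_def)
  show "\<forall>q. nonzero q \<and> on_line (1,0,-1) q \<and> feval 6 F0 q = 0 \<longrightarrow> (\<exists>p\<in>{(1,-5,1),(1,1,1),(1,7,1)}. proj_eq p q)"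
  proof (intro allI impI)
    fix q :: cvec assume h: "nonzero q \<and> on_line (1,0,-1) q \<and> feval 6 F0 q = 0"
    obtain x y z where q: "q = (x,y,z)" by (cases q)
    have zx: "z = x" using h q by (simp add: on_line_def cdot_def)
    have "(y+5*x)^2*(y-x)^2*(y-7*x)^2 = 0" using h q zx F0_L'[of x y] by simp
    then have y: "y = -5*x \<or> y = x \<or> y = 7*x" by (auto simp: add_eq_0_iff2)
    have x: "x \<noteq> 0" using h q zx y by (auto simp: nonzero_def)
    show "\<exists>p\<in>{(1,-5,1),(1,1,1),(1,7,1)}. proj_eq p q"
      using y
    proof (elim disjE)
      assume "y = -5*x" then show ?thesis using x q zx by (auto simp: proj_eq_def vscale_def intro!: exI[of _ x])
    next
      assume "y = x" then show ?thesis using x q zx by (auto simp: proj_eq_def vscale_def intro!: exI[of _ x])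
    next
      assume "y = 7*x" then show ?thesis using x q zx by (auto simp: proj_eq_def vscale_def intro!: exI[of _ x])
    qed
  qed
qed

lemma meets_T0: "meets_in 6 F0 (0,0,1) {(1,0,0),(1,6,0)}"
  unfolding meets_in_def
proof (intro conjI)
  show "\<forall>p\<in>{(1,0,0),(1,6,0)}. nonzero p \<and> on_line (0,0,1) p \<and> feval 6 F0 p = 0"
    using F0_T'[of 1] by (auto simp: nonzero_def on_line_def cdot_def)
  show "\<forall>p\<in>{(1,0,0),(1,6,0)}. \<forall>q\<in>{(1,0,0),(1,6,0)}. proj_eq p q \<longrightarrow> p = q"
    by (auto simp: proj_eq_def vscale_def)
  show "\<forall>q. nonzero q \<and> on_line (0,0,1) q \<and> feval 6 F0 q = 0 \<longrightarrow> (\<exists>p\<in>{(1,0,0),(1,6,0)}. proj_eq p q)"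
  proof (intro allI impI)
    fix q :: cvec assume h: "nonzero q \<and> on_line (0,0,1) q \<and> feval 6 F0 q = 0"
    obtain x y z where q: "q = (x,y,z)" by (cases q)
    have z: "z = 0" using h q by (simp add: on_line_def cdot_def)
    have "y^3*(y-6*x)^3 = 0" using h q z F0_T'[of x y] by simp
    then have y: "y = 0 \<or> y = 6*x" by auto
    have x: "x \<noteq> 0" using h q z y by (auto simp: nonzero_def)
    show "\<exists>p\<in>{(1,0,0),(1,6,0)}. proj_eq p q"
      using y
    proof (elim disjE)
      assume "y = 0" then show ?thesis using x q z by (auto simp: proj_eq_def vscale_def intro!: exI[of _ x])
    next
      assume "y = 6*x" then show ?thesis using x q z by (auto simp: proj_eq_def vscale_def intro!: exI[of _ x])
    qed
  qed
qed


lemma lin_scaled_rows: "lin (vscale c t1) (vscale c t2) (vscale c t3) W = vscale c (lin t1 t2 t3 W)"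
  by (cases t1; cases t2; cases t3; cases W) (simp add: lin_def vscale_def cdot_def algebra_simps)

lemma lin_inv_id1:
  fixes a1 a2 a3 b1 b2 b3 c1 c2 c3 x y z :: complex
  shows "lin (a1,a2,a3) (b1,b2,b3) (c1,c2,c3) (lin
     ((b2*c3 - b3*c2), (c2*a3 - c3*a2), (a2*b3 - a3*b2))
     ((b3*c1 - b1*c3), (c3*a1 - c1*a3), (a3*b1 - a1*b3))
     ((b1*c2 - b2*c1), (c1*a2 - c2*a1), (a1*b2 - a2*b1)) (x,y,z)) =
     vscale (a1*(b2*c3 - b3*c2) - a2*(b1*c3 - b3*c1) + a3*(b1*c2 - b2*c1)) (x,y,z)"
  by (simp add: lin_def cdot_def vscale_def algebra_simps)

lemma lin_inv_id2:
  fixes a1 a2 a3 b1 b2 b3 c1 c2 c3 x y z :: complex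
  shows "lin
     ((b2*c3 - b3*c2), (c2*a3 - c3*a2), (a2*b3 - a3*b2))
     ((b3*c1 - b1*c3), (c3*a1 - c1*a3), (a3*b1 - a1*b3))
     ((b1*c2 - b2*c1), (c1*a2 - c2*a1), (a1*b2 - a2*b1)) (lin (a1,a2,a3) (b1,b2,b3) (c1,c2,c3) (x,y,z)) =
     vscale (a1*(b2*c3 - b3*c2) - a2*(b1*c3 - b3*c1) + a3*(b1*c2 - b2*c1)) (x,y,z)"
  by (simp add: lin_def cdot_def vscale_def algebra_simps)


lemma vscale_vscale: "vscale a (vscale b X) = vscale (a*b) X"
  by (cases X) (simp add: vscale_def)

lemma vscale_1: "vscale 1 X = X"
  by (cases X) (simp add: vscale_def)

lemma lin_inverse:
  fixes a1 a2 a3 b1 b2 b3 c1 c2 c3 :: complex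
  assumes De: "De = a1*(b2*c3 - b3*c2) - a2*(b1*c3 - b3*c1) + a3*(b1*c2 - b2*c1)" and D0: "De \<noteq> 0"
  shows "lintr (a1,a2,a3) (b1,b2,b3) (c1,c2,c3)
     (vscale (1/De) ((b2*c3 - b3*c2), (c2*a3 - c3*a2), (a2*b3 - a3*b2)))
     (vscale (1/De) ((b3*c1 - b1*c3), (c3*a1 - c1*a3), (a3*b1 - a1*b3)))
     (vscale (1/De) ((b1*c2 - b2*c1), (c1*a2 - c2*a1), (a1*b2 - a2*b1)))"
proof
  fix X :: cvec
  obtain x y z where X: "X = (x,y,z)" by (cases X)
  show "lin (a1,a2,a3) (b1,b2,b3) (c1,c2,c3) (lin
     (vscale (1/De) ((b2*c3 - b3*c2), (c2*a3 - c3*a2), (a2*b3 - a3*b2)))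
     (vscale (1/De) ((b3*c1 - b1*c3), (c3*a1 - c1*a3), (a3*b1 - a1*b3)))
     (vscale (1/De) ((b1*c2 - b2*c1), (c1*a2 - c2*a1), (a1*b2 - a2*b1))) X) = X"
    unfolding lin_scaled_rows lin_vscale X lin_inv_id1 De[symmetric] vscale_vscale using D0
    by (simp add: vscale_1)
  show "lin
     (vscale (1/De) ((b2*c3 - b3*c2), (c2*a3 - c3*a2), (a2*b3 - a3*b2)))
     (vscale (1/De) ((b3*c1 - b1*c3), (c3*a1 - c1*a3), (a3*b1 - a1*b3)))
     (vscale (1/De) ((b1*c2 - b2*c1), (c1*a2 - c2*a1), (a1*b2 - a2*b1))) (lin (a1,a2,a3) (b1,b2,b3) (c1,c2,c3) X) = X"
    unfolding lin_scaled_rows X lin_inv_id2 De[symmetric] vscale_vscale using D0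
    by (simp add: vscale_1)
qed


definition cross :: "cvec \<Rightarrow> cvec \<Rightarrow> cvec" where
  "cross u w = (case u of (x1,x2,x3) \<Rightarrow> case w of (y1,y2,y3) \<Rightarrow>
     (x2*y3 - x3*y2, x3*y1 - x1*y3, x1*y2 - x2*y1))"

lemma proj_eq_sym: "proj_eq p q \<Longrightarrow> proj_eq q p"
  unfolding proj_eq_def
proof (elim exE conjE)
  fix c assume c: "c \<noteq> 0" "q = vscale c p"
  then have "p = vscale (1/c) q" by (simp add: vscale_vscale vscale_1)
  then show "\<exists>c. c \<noteq> 0 \<and> p = vscale c q" using c by (intro exI[of _ "1/c"]) auto
qed

lemma cross0:
  assumes "cross x y = (0,0,0)" and "nonzero y"
  shows "\<exists>k. x = vscale k y"
proof -
  obtain x1 x2 x3 where x: "x = (x1,x2,x3)" by (cases x)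
  obtain y1 y2 y3 where y: "y = (y1,y2,y3)" by (cases y)
  have e: "x2*y3 = x3*y2" "x3*y1 = x1*y3" "x1*y2 = x2*y1"
    using assms(1) unfolding x y cross_def by auto
  have "y1 \<noteq> 0 \<or> y2 \<noteq> 0 \<or> y3 \<noteq> 0" using assms(2) y by (auto simp: nonzero_def)
  then show ?thesis
  proof (elim disjE)
    assume h: "y1 \<noteq> 0"
    show ?thesis
      by (rule exI[of _ "x1/y1"]) (use h e in \<open>simp add: x y vscale_def field_simps\<close>)
  next
    assume h: "y2 \<noteq> 0"
    show ?thesis
      by (rule exI[of _ "x2/y2"]) (use h e in \<open>simp add: x y vscale_def field_simps\<close>)
  next
    assume h: "y3 \<noteq> 0"
    show ?thesis
      by (rule exI[of _ "x3/y3"]) (use h e in \<open>simp add: x y vscale_def field_simps\<close>)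
  qed
qed

lemma cross_nz:
  assumes "nonzero D" "nonzero T" "\<not> proj_eq D T"
  shows "nonzero (cross D T)"
proof (rule ccontr)
  assume "\<not> nonzero (cross D T)"
  then have "cross D T = (0,0,0)" by (simp add: nonzero_def)
  then obtain k where k: "D = vscale k T" using cross0 assms(2) by blast
  have "k \<noteq> 0" using k assms(1) by (cases T) (auto simp: nonzero_def vscale_def)
  then have "proj_eq T D" using k unfolding proj_eq_def by auto
  then show False using assms(3) proj_eq_sym by blast
qed

lemma cross_prop:
  assumes "on_line D a" "on_line T a" "nonzero a"
  shows "\<exists>k. cross D T = vscale k a"
proof (rule cross0[OF _ assms(3)])
  obtain d1 d2 d3 where D: "D = (d1,d2,d3)" by (cases D)
  obtain t1 t2 t3 where T: "T = (t1,t2,t3)" by (cases T)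
  obtain a1 a2 a3 where a: "a = (a1,a2,a3)" by (cases a)
  have h: "d1*a1 + d2*a2 + d3*a3 = 0" "t1*a1 + t2*a2 + t3*a3 = 0"
    using assms unfolding D T a on_line_def cdot_def by auto
  have "cross (cross D T) a = (t1 * (d1*a1 + d2*a2 + d3*a3) - d1 * (t1*a1 + t2*a2 + t3*a3),
     t2 * (d1*a1 + d2*a2 + d3*a3) - d2 * (t1*a1 + t2*a2 + t3*a3),
     t3 * (d1*a1 + d2*a2 + d3*a3) - d3 * (t1*a1 + t2*a2 + t3*a3))"
    unfolding D T a cross_def by (simp add: algebra_simps)
  then show "cross (cross D T) a = (0,0,0)" using h by simp
qed

lemma on_line_cross1: "on_line D (cross D T)"
  by (cases D; cases T) (simp add: on_line_def cdot_def cross_def algebra_simps)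

lemma on_line_cross2: "on_line T (cross D T)"
  by (cases D; cases T) (simp add: on_line_def cdot_def cross_def algebra_simps)

lemma cdot_vscale_l: "cdot (vscale c l) X = c * cdot l X"
  by (cases l; cases X) (simp add: cdot_def vscale_def algebra_simps)

lemma on_line_vscale: "c \<noteq> 0 \<Longrightarrow> on_line (vscale c l) X \<longleftrightarrow> on_line l X"
  by (simp add: on_line_def cdot_vscale_l)

lemma on_line_vscale2: "on_line l (vscale c X) \<longleftrightarrow> c = 0 \<or> on_line l X"
  by (simp add: on_line_def cdot_vscale)

lemma proj_eq_scale:
  assumes "c \<noteq> 0" "c' \<noteq> 0"
  shows "proj_eq (vscale c p) (vscale c' q) \<longleftrightarrow> proj_eq p q"
proof
  assume "proj_eq (vscale c p) (vscale c' q)"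
  then obtain e where e: "e \<noteq> 0" "vscale c' q = vscale e (vscale c p)" unfolding proj_eq_def by auto
  then have "vscale (1/c') (vscale c' q) = vscale (1/c') (vscale e (vscale c p))" by simp
  then have "q = vscale (e * c / c') p" using assms by (simp add: vscale_vscale vscale_1 field_simps)
  then show "proj_eq p q" using e assms unfolding proj_eq_def by (intro exI[of _ "e*c/c'"]) auto
next
  assume "proj_eq p q"
  then obtain e where e: "e \<noteq> 0" "q = vscale e p" unfolding proj_eq_def by auto
  then have "vscale c' q = vscale (c' * e / c) (vscale c p)" using assms
    by (simp add: vscale_vscale field_simps)
  then show "proj_eq (vscale c p) (vscale c' q)" using e assms unfolding proj_eq_def
    by (intro exI[of _ "c'*e/c"]) auto
qed

lemma nonzero_vscale: "c \<noteq> 0 \<Longrightarrow> nonzero p \<Longrightarrow> nonzero (vscale c p)"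
  by (cases p) (auto simp: nonzero_def vscale_def)

lemma meets_in_vscale: "c \<noteq> 0 \<Longrightarrow> meets_in d F (vscale c l) P \<longleftrightarrow> meets_in d F l P"
  unfolding meets_in_def by (simp add: on_line_vscale)

lemma tangent_at_vscale: "c \<noteq> 0 \<Longrightarrow> tangent_at d F (vscale c l) p \<longleftrightarrow> tangent_at d F l p"
  unfolding tangent_at_def by (simp add: on_line_vscale)

lemma rat_vec_vin: "rat_vec p \<longleftrightarrow> vin \<rat> p"
  by (cases p) (simp add: rat_vec_def vin_def)

lemma number_field_Rats: "number_field \<rat>"
proof -
  have B: "(\<rat>::complex set) \<subseteq> {(\<Sum>b\<in>{1::complex}. of_rat (r b) * b) | r. True}"
  proof
    fix x :: complex assume "x \<in> \<rat>"
    then obtain q where q: "x = of_rat q" by (auto elim: Rats_cases)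
    show "x \<in> {(\<Sum>b\<in>{1::complex}. of_rat (r b) * b) | r. True}"
      by (rule CollectI, rule exI[of _ "\<lambda>_. q"]) (simp add: q)
  qed
  show ?thesis unfolding number_field_def
    by (intro conjI ballI impI exI[of _ "{1}"]) (use B in auto)
qed


lemma vin_lin_Q: "vin \<rat> s1 \<Longrightarrow> vin \<rat> s2 \<Longrightarrow> vin \<rat> s3 \<Longrightarrow> vin \<rat> q \<Longrightarrow> vin \<rat> (lin s1 s2 s3 q)"
  by (cases s1; cases s2; cases s3; cases q) (simp add: vin_def lin_def cdot_def)

lemma vin_vscale_Q: "c \<in> \<rat> \<Longrightarrow> vin \<rat> q \<Longrightarrow> vin \<rat> (vscale c q)"
  by (cases q) (simp add: vin_def vscale_def)

lemma F0_a0: "feval 6 F0 (0,1,0) = 1"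
  by (simp add: feval_F0)

lemma F0_rat: "F0 m \<in> \<rat>"
  unfolding F0_def by (simp split: if_split)

lemma gen:
  fixes D L T a :: cvec
  assumes nD: "nonzero D" and nL: "nonzero L" and nT: "nonzero T" and na: "nonzero a"
    and pDL: "\<not> proj_eq D L" and pDT: "\<not> proj_eq D T" and pLT: "\<not> proj_eq L T"
    and oD: "on_line D a" and oL: "on_line L a" and oT: "on_line T a"
  shows "\<exists>F PD PL PT. is_form 6 F \<and> irreducible_form 6 F \<and> feval 6 F a \<noteq> 0 \<and>
     meets_in 6 F D PD \<and> card PD = 3 \<and> (\<forall>p\<in>PD. mult_at 6 F p = 1 \<and> tangent_at 6 F D p) \<and>
     meets_in 6 F L PL \<and> card PL = 3 \<and> (\<forall>p\<in>PL. mult_at 6 F p = 2) \<and>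
     meets_in 6 F T PT \<and> card PT = 2 \<and> (\<forall>p\<in>PT. mult_at 6 F p = 3) \<and>
     ((vin \<rat> D \<and> vin \<rat> L \<and> vin \<rat> T \<and> vin \<rat> a) \<longrightarrow>
        (\<forall>p\<in>PD \<union> PL \<union> PT. vin \<rat> p) \<and> (\<forall>m. F m \<in> \<rat>))"
proof -
  obtain d1 d2 d3 where D: "D = (d1,d2,d3)" by (cases D)
  obtain l1 l2 l3 where L: "L = (l1,l2,l3)" by (cases L)
  obtain t1 t2 t3 where T: "T = (t1,t2,t3)" by (cases T)
  obtain a1 a2 a3 where A: "a = (a1,a2,a3)" by (cases a)
  define Q where "Q = (vin \<rat> D \<and> vin \<rat> L \<and> vin \<rat> T \<and> vin \<rat> a)"
  obtain k where k: "cross D T = vscale k a" using cross_prop[OF oD oT na] by blast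
  have nDT: "nonzero (cross D T)" by (rule cross_nz[OF nD nT pDT])
  have k0: "k \<noteq> 0" using k nDT by (auto simp: nonzero_def vscale_def A)
  define m1 where "m1 = (if a1 \<noteq> 0 then 1 else 0::complex)"
  define m2 where "m2 = (if a1 = 0 \<and> a2 \<noteq> 0 then 1 else 0::complex)"
  define m3 where "m3 = (if a1 = 0 \<and> a2 = 0 then 1 else 0::complex)"
  define ma where "ma = m1*a1 + m2*a2 + m3*a3"
  have ma0: "ma \<noteq> 0" using na A by (auto simp: ma_def m1_def m2_def m3_def nonzero_def)
  define De0 where "De0 = cdot (m1,m2,m3) (cross D T)"
  have De0k: "De0 = k * ma" unfolding De0_def k cdot_vscale by (simp add: ma_def cdot_def A)
  have De0nz: "De0 \<noteq> 0" using De0k k0 ma0 by simp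
  have Ln: "cdot L (cross D T) = 0" using k oL by (simp add: cdot_vscale on_line_def)
  define \<alpha> where "\<alpha> = cdot L (cross T (m1,m2,m3))"
  define \<beta> where "\<beta> = cdot D (cross L (m1,m2,m3))"
  have cram: "De0 * cdot L X = \<alpha> * cdot D X + \<beta> * cdot T X" for X
  proof -
    obtain x y z where X: "X = (x,y,z)" by (cases X)
    have "De0 * cdot L X = \<alpha> * cdot D X + \<beta> * cdot T X + cdot L (cross D T) * cdot (m1,m2,m3) X"
      unfolding De0_def \<alpha>_def \<beta>_def D L T X cross_def cdot_def by (simp add: algebra_simps)
    then show ?thesis using Ln by simp
  qed
  have \<alpha>0: "\<alpha> \<noteq> 0"
  proof
    assume "\<alpha> = 0"
    then have c: "cdot L X = (\<beta>/De0) * cdot T X" for X using cram[of X] De0nz by (simp add: field_simps)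
    have LT: "L = vscale (\<beta>/De0) T"
      using c[of "(1,0,0)"] c[of "(0,1,0)"] c[of "(0,0,1)"] by (simp add: L T cdot_def vscale_def)
    then have b: "\<beta>/De0 \<noteq> 0" using nL by (auto simp: nonzero_def vscale_def T)
    have "proj_eq T L" unfolding proj_eq_def by (rule exI[of _ "\<beta>/De0"]) (use LT b in simp)
    then show False using pLT proj_eq_sym by blast
  qed
  have \<beta>0: "\<beta> \<noteq> 0"
  proof
    assume "\<beta> = 0"
    then have c: "cdot L X = (\<alpha>/De0) * cdot D X" for X using cram[of X] De0nz by (simp add: field_simps)
    have LD: "L = vscale (\<alpha>/De0) D"
      using c[of "(1,0,0)"] c[of "(0,1,0)"] c[of "(0,0,1)"] by (simp add: L D cdot_def vscale_def)
    then have b: "\<alpha>/De0 \<noteq> 0" using nL by (auto simp: nonzero_def vscale_def D)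
    then show False using LD pDL unfolding proj_eq_def by blast
  qed
  define \<kappa> where "\<kappa> = - \<beta> / \<alpha>"
  have \<kappa>0: "\<kappa> \<noteq> 0" using \<alpha>0 \<beta>0 by (simp add: \<kappa>_def)
  define De where "De = d1*(m2*(\<kappa>*t3) - m3*(\<kappa>*t2)) - d2*(m1*(\<kappa>*t3) - m3*(\<kappa>*t1)) + d3*(m1*(\<kappa>*t2) - m2*(\<kappa>*t1))"
  have DeE: "De = - \<kappa> * De0" unfolding De_def De0_def D T cross_def cdot_def by (simp add: algebra_simps)
  have De_nz: "De \<noteq> 0" using DeE \<kappa>0 De0nz by simp
  define s1 where "s1 = vscale (1/De) ((m2*(\<kappa>*t3) - m3*(\<kappa>*t2)), ((\<kappa>*t2)*d3 - (\<kappa>*t3)*d2), (d2*m3 - d3*m2))"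
  define s2 where "s2 = vscale (1/De) ((m3*(\<kappa>*t1) - m1*(\<kappa>*t3)), ((\<kappa>*t3)*d1 - (\<kappa>*t1)*d3), (d3*m1 - d1*m3))"
  define s3 where "s3 = vscale (1/De) ((m1*(\<kappa>*t2) - m2*(\<kappa>*t1)), ((\<kappa>*t1)*d2 - (\<kappa>*t2)*d1), (d1*m2 - d2*m1))"
  define r1 where "r1 = D"
  define r2 where "r2 = (m1,m2,m3)"
  define r3 where "r3 = (\<kappa>*t1,\<kappa>*t2,\<kappa>*t3)"
  have LT: "lintr r1 r2 r3 s1 s2 s3"
    unfolding s1_def s2_def s3_def r1_def r2_def r3_def D by (rule lin_inverse[OF De_def De_nz])
  have inv1: "lin r1 r2 r3 (lin s1 s2 s3 X) = X" for X using lintr.inv1[OF LT] .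
  have r3T: "cdot r3 X = \<kappa> * cdot T X" for X
    unfolding r3_def T by (cases X) (simp add: cdot_def algebra_simps)
  have lD: "on_line D X \<longleftrightarrow> on_line (1,0,0) (lin r1 r2 r3 X)" for X
    by (simp add: lin_def on_line_def cdot_def r1_def)
  have lT: "on_line T X \<longleftrightarrow> on_line (0,0,1) (lin r1 r2 r3 X)" for X
    using \<kappa>0 by (simp add: lin_def on_line_def r3T) (simp add: cdot_def r3T)
  have lL: "on_line L X \<longleftrightarrow> on_line (1,0,-1) (lin r1 r2 r3 X)" for X
  proof -
    have "on_line (1,0,-1) (lin r1 r2 r3 X) \<longleftrightarrow> cdot D X - \<kappa> * cdot T X = 0"
      by (simp add: lin_def on_line_def cdot_def r1_def r3T[unfolded cdot_def])
    moreover have "De0 * cdot L X = \<alpha> * (cdot D X - \<kappa> * cdot T X)"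
      using cram[of X] \<alpha>0 by (simp add: \<kappa>_def field_simps)
    ultimately show ?thesis using De0nz \<alpha>0 unfolding on_line_def
      by (metis mult_eq_0_iff)
  qed
  have psia: "lin r1 r2 r3 a = vscale ma (0,1,0)"
  proof -
    have "cdot D a = 0" "cdot T a = 0" using oD oT by (auto simp: on_line_def)
    moreover have "cdot (m1,m2,m3) a = ma" by (simp add: cdot_def ma_def A)
    ultimately show ?thesis by (simp add: lin_def r1_def r2_def r3T vscale_def)
  qed
  define K :: "complex set" where "K = (if Q then \<rat> else UNIV)"
  have RK: "ring_set K" by (simp add: K_def ring_set_UNIV ring_set_Rats)
  have QR: "d1 \<in> \<rat> \<and> d2 \<in> \<rat> \<and> d3 \<in> \<rat> \<and> l1 \<in> \<rat> \<and> l2 \<in> \<rat> \<and> l3 \<in> \<rat> \<and>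
            t1 \<in> \<rat> \<and> t2 \<in> \<rat> \<and> t3 \<in> \<rat> \<and> a1 \<in> \<rat> \<and> a2 \<in> \<rat> \<and> a3 \<in> \<rat>" if Q
    using that unfolding Q_def D L T A vin_def by auto
  have mQ: "m1 \<in> \<rat>" "m2 \<in> \<rat>" "m3 \<in> \<rat>" by (auto simp: m1_def m2_def m3_def)
  have \<kappa>Q: "\<kappa> \<in> \<rat>" if Q
    using QR[OF that] mQ unfolding \<kappa>_def \<alpha>_def \<beta>_def L T D cross_def cdot_def by simp
  have DeQ: "De \<in> \<rat>" if Q
    using QR[OF that] mQ \<kappa>Q[OF that] unfolding De_def by simp
  have rK: "vin K r1" "vin K r2" "vin K r3"
    unfolding K_def r1_def r2_def r3_def using QR \<kappa>Q mQ by (auto simp: vin_def D)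
  have sQ: "vin \<rat> s1" "vin \<rat> s2" "vin \<rat> s3" if Q
    unfolding s1_def s2_def s3_def using QR[OF that] mQ \<kappa>Q[OF that] DeQ[OF that]
    by (simp_all add: vin_def vscale_def)
  have F0K: "\<forall>m. F0 m \<in> K" using F0_rat by (auto simp: K_def)
  have supp0: "\<forall>m. m \<notin> fmonos 6 \<longrightarrow> F0 m = 0" using F0_supp' by auto
  obtain F' where F': "\<forall>m. m \<notin> fmonos 6 \<longrightarrow> F' m = 0" "\<forall>m. F' m \<in> K"
      "\<forall>X. feval 6 F0 (lin r1 r2 r3 X) = feval 6 F' X"
    using hp_compose[OF RK supp0 F0K rK] unfolding hpK_def lin_def by auto
  have FF: "feval 6 F' X = feval 6 F0 (lin r1 r2 r3 X)" for X using spec[OF F'(3), of X] by simp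
  define PD0 :: "cvec set" where "PD0 = {(0,-12,1),(0,0,1),(0,6,1)}"
  define PL0 :: "cvec set" where "PL0 = {(1,-5,1),(1,1,1),(1,7,1)}"
  define PT0 :: "cvec set" where "PT0 = {(1,0,0),(1,6,0)}"
  have fa: "feval 6 F' a \<noteq> 0"
    using ma0 by (simp add: FF psia feval_vscale F0_a0)
  have isf: "is_form 6 F'"
    unfolding is_form_def
  proof (intro conjI)
    show "\<forall>m. m \<notin> fmonos 6 \<longrightarrow> F' m = 0" by (rule F'(1))
    show "\<exists>m. F' m \<noteq> 0"
    proof (rule ccontr)
      assume "\<not> (\<exists>m. F' m \<noteq> 0)"
      then have "feval 6 F' a = 0" by (cases a) (simp add: feval_def)
      then show False using fa by simp
    qed
  qed
  have sirr': "sirr 6 F'" by (rule lintr.sirr_tr[OF LT FF sirr_F0])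
  have irr: "irreducible_form 6 F'"
    unfolding irreducible_form_def using isf sirr' unfolding sirr_def is_form_def by blast
  have bk: "lin r1 r2 r3 (lin s1 s2 s3 q) = q" for q by (rule lintr.inv1[OF LT])
  have mD: "meets_in 6 F' D (lin s1 s2 s3 ` PD0)"
    unfolding PD0_def by (rule lintr.meets_tr[OF LT FF lD meets_D0])
  have mL: "meets_in 6 F' L (lin s1 s2 s3 ` PL0)"
    unfolding PL0_def by (rule lintr.meets_tr[OF LT FF lL meets_L0])
  have mT: "meets_in 6 F' T (lin s1 s2 s3 ` PT0)"
    unfolding PT0_def by (rule lintr.meets_tr[OF LT FF lT meets_T0])
  have cD: "card (lin s1 s2 s3 ` PD0) = 3" unfolding lintr.card_tr[OF LT] PD0_def by simp
  have cL: "card (lin s1 s2 s3 ` PL0) = 3" unfolding lintr.card_tr[OF LT] PL0_def by simp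
  have cT: "card (lin s1 s2 s3 ` PT0) = 2" unfolding lintr.card_tr[OF LT] PT0_def by simp
  have multD: "\<forall>p\<in>lin s1 s2 s3 ` PD0. mult_at 6 F' p = 1 \<and> tangent_at 6 F' D p"
    unfolding PD0_def
    by (auto simp: lintr.mult_tr[OF LT FF] lintr.tangent_tr[OF LT FF lD] bk
        mult_pt0 mult_pt1 mult_pt2 tan_pt0 tan_pt1 tan_pt2)
  have multL: "\<forall>p\<in>lin s1 s2 s3 ` PL0. mult_at 6 F' p = 2"
    unfolding PL0_def by (auto simp: lintr.mult_tr[OF LT FF] bk mult_pt3 mult_pt4 mult_pt5)
  have multT: "\<forall>p\<in>lin s1 s2 s3 ` PT0. mult_at 6 F' p = 3"
    unfolding PT0_def by (auto simp: lintr.mult_tr[OF LT FF] bk mult_pt6 mult_pt7)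
  have rat: "Q \<longrightarrow> (\<forall>p\<in>lin s1 s2 s3 ` PD0 \<union> lin s1 s2 s3 ` PL0 \<union> lin s1 s2 s3 ` PT0. vin \<rat> p) \<and> (\<forall>m. F' m \<in> \<rat>)"
  proof
    assume q: Q
    have "vin \<rat> p" if "p \<in> PD0 \<union> PL0 \<union> PT0" for p
      using that unfolding PD0_def PL0_def PT0_def by (auto simp: vin_def)
    then have "\<forall>p\<in>lin s1 s2 s3 ` PD0 \<union> lin s1 s2 s3 ` PL0 \<union> lin s1 s2 s3 ` PT0. vin \<rat> p"
      using sQ[OF q] by (auto intro!: vin_lin_Q)
    moreover have "\<forall>m. F' m \<in> \<rat>" using F'(2) q by (simp add: K_def)
    ultimately show "(\<forall>p\<in>lin s1 s2 s3 ` PD0 \<union> lin s1 s2 s3 ` PL0 \<union> lin s1 s2 s3 ` PT0. vin \<rat> p) \<and> (\<forall>m. F' m \<in> \<rat>)" by blast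
  qed
  show ?thesis
    apply (rule exI[of _ F'], rule exI[of _ "lin s1 s2 s3 ` PD0"], rule exI[of _ "lin s1 s2 s3 ` PL0"],
           rule exI[of _ "lin s1 s2 s3 ` PT0"])
    using isf irr fa mD cD multD mL cL multL mT cT multT rat unfolding Q_def by blast
qed


lemma vin_cross_Q: "vin \<rat> u \<Longrightarrow> vin \<rat> w \<Longrightarrow> vin \<rat> (cross u w)"
  by (cases u; cases w) (simp add: vin_def cross_def)

theorem mainTheorem12:
  fixes D L T a :: cvec
  assumes "nonzero D" and "nonzero L" and "nonzero T" and "nonzero a"
    and "\<not> proj_eq D L" and "\<not> proj_eq D T" and "\<not> proj_eq L T"
    and "on_line D a" and "on_line L a" and "on_line T a"
  shows "\<exists>F PD PL PT.
     is_form 6 F \<and> irreducible_form 6 F \<and> feval 6 F a \<noteq> 0 \<and>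
     meets_in 6 F D PD \<and> card PD = 3 \<and>
       (\<forall>p\<in>PD. mult_at 6 F p = 1 \<and> tangent_at 6 F D p) \<and>
     meets_in 6 F L PL \<and> card PL = 3 \<and> (\<forall>p\<in>PL. mult_at 6 F p = 2) \<and>
     meets_in 6 F T PT \<and> card PT = 2 \<and> (\<forall>p\<in>PT. mult_at 6 F p = 3) \<and>
     ((rat_point D \<and> rat_point L \<and> rat_point T) \<longrightarrow>
        (\<forall>p\<in>PD \<union> PL \<union> PT. rat_point p) \<and> over_number_field F)"
proof (cases "rat_point D \<and> rat_point L \<and> rat_point T")
  case False
  then show ?thesis using gen[OF assms] by blast
next
  case True
  obtain cD where cD: "cD \<noteq> 0" "rat_vec (vscale cD D)" using True unfolding rat_point_def by blast
  obtain cL where cL: "cL \<noteq> 0" "rat_vec (vscale cL L)" using True unfolding rat_point_def by blast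
  obtain cT where cT: "cT \<noteq> 0" "rat_vec (vscale cT T)" using True unfolding rat_point_def by blast
  define D' where "D' = vscale cD D"
  define L' where "L' = vscale cL L"
  define T' where "T' = vscale cT T"
  define a' where "a' = cross D' T'"
  have nD': "nonzero D'" unfolding D'_def by (rule nonzero_vscale[OF cD(1) assms(1)])
  have nL': "nonzero L'" unfolding L'_def by (rule nonzero_vscale[OF cL(1) assms(2)])
  have nT': "nonzero T'" unfolding T'_def by (rule nonzero_vscale[OF cT(1) assms(3)])
  have pDL: "\<not> proj_eq D' L'" unfolding D'_def L'_def using proj_eq_scale[OF cD(1) cL(1)] assms(5) by simp
  have pDT: "\<not> proj_eq D' T'" unfolding D'_def T'_def using proj_eq_scale[OF cD(1) cT(1)] assms(6) by simp
  have pLT: "\<not> proj_eq L' T'" unfolding L'_def T'_def using proj_eq_scale[OF cL(1) cT(1)] assms(7) by simp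
  have na': "nonzero a'" unfolding a'_def by (rule cross_nz[OF nD' nT' pDT])
  have oD': "on_line D' a" unfolding D'_def using on_line_vscale[OF cD(1)] assms(8) by simp
  have oT': "on_line T' a" unfolding T'_def using on_line_vscale[OF cT(1)] assms(10) by simp
  have oL': "on_line L' a" unfolding L'_def using on_line_vscale[OF cL(1)] assms(9) by simp
  obtain k where k: "a' = vscale k a" unfolding a'_def using cross_prop[OF oD' oT' assms(4)] by blast
  have k0: "k \<noteq> 0" using na' k by (cases a) (auto simp: nonzero_def vscale_def)
  have oDa: "on_line D' a'" unfolding a'_def by (rule on_line_cross1)
  have oTa: "on_line T' a'" unfolding a'_def by (rule on_line_cross2)
  have oLa: "on_line L' a'" unfolding k using oL' by (simp add: on_line_vscale2)
  have qD: "vin \<rat> D'" "vin \<rat> L'" "vin \<rat> T'"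
    using cD cL cT unfolding D'_def L'_def T'_def by (simp_all add: rat_vec_vin)
  have qa: "vin \<rat> a'" unfolding a'_def using qD by (intro vin_cross_Q)
  obtain F PD PL PT where H:
     "is_form 6 F" "irreducible_form 6 F" "feval 6 F a' \<noteq> 0"
     "meets_in 6 F D' PD" "card PD = 3" "\<forall>p\<in>PD. mult_at 6 F p = 1 \<and> tangent_at 6 F D' p"
     "meets_in 6 F L' PL" "card PL = 3" "\<forall>p\<in>PL. mult_at 6 F p = 2"
     "meets_in 6 F T' PT" "card PT = 2" "\<forall>p\<in>PT. mult_at 6 F p = 3"
     "(vin \<rat> D' \<and> vin \<rat> L' \<and> vin \<rat> T' \<and> vin \<rat> a') \<longrightarrow>
        (\<forall>p\<in>PD \<union> PL \<union> PT. vin \<rat> p) \<and> (\<forall>m. F m \<in> \<rat>)"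
    using gen[OF nD' nL' nT' na' pDL pDT pLT oDa oLa oTa] by blast
  have fa: "feval 6 F a \<noteq> 0" using H(3) k k0 by (simp add: feval_vscale)
  have mD: "meets_in 6 F D PD" using H(4) unfolding D'_def by (simp add: meets_in_vscale cD(1))
  have mL: "meets_in 6 F L PL" using H(7) unfolding L'_def by (simp add: meets_in_vscale cL(1))
  have mT: "meets_in 6 F T PT" using H(10) unfolding T'_def by (simp add: meets_in_vscale cT(1))
  have tD: "\<forall>p\<in>PD. mult_at 6 F p = 1 \<and> tangent_at 6 F D p"
    using H(6) unfolding D'_def by (simp add: tangent_at_vscale cD(1))
  have rq: "(\<forall>p\<in>PD \<union> PL \<union> PT. vin \<rat> p) \<and> (\<forall>m. F m \<in> \<rat>)" using H(13) qD qa by blast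
  have rp: "\<forall>p\<in>PD \<union> PL \<union> PT. rat_point p"
  proof
    fix p assume "p \<in> PD \<union> PL \<union> PT"
    then have "vin \<rat> p" using rq by blast
    then show "rat_point p" unfolding rat_point_def
      by (intro exI[of _ 1]) (simp add: vscale_1 rat_vec_vin)
  qed
  have onf: "over_number_field F"
    unfolding over_number_field_def
    by (rule exI[of _ "\<rat>"], rule exI[of _ 1]) (use rq number_field_Rats in simp)
  show ?thesis
    using H(1,2,5,8,9,11,12) fa mD mL mT tD rp onf by blast
qed


end
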